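(* Let $(V,m)$ be a discrete measure space and $(b,c)$ a graph over $(V,m)$. If $Q^{(N)}\neq Q^{(D)}$, then there exists a non-negative function $u\in D(Q^{(N)})\cap\ell^\infty(V)$, $u\not\equiv 0$, with $(\widetilde L+1)u=0$.
   Context: $V$ is a finite or countably infinite set and $m:V\to(0,\infty)$; $(V,m)$ is a discrete measure space. $C(V)$ is the set of all functions $V\to\mathbb C$, $C_c(V)$ the finitely supported ones, and $\ell^2(V,m)$ carries $\langle u,v\rangle=\sum_x u(x)\overline{v(x)}m(x)$. A graph over $(V,m)$ is a pair $(b,c)$ with $c:V\to[0,\infty)$, $b:V\times V\to[0,\infty)$, $b(x,x)=0$, $b(x,y)=b(y,x)$, $\sum_y b(x,y)<\infty$. Let $\widetilde F=\{u\in C(V):\sum_y|b(x,y)u(y)|<\infty\ \forall x\}$ and $\widetilde L u(x)=\frac{1}{m(x)}\sum_y b(x,y)(u(x)-u(y))+\frac{c(x)}{m(x)}u(x)$ for $u\in\widetilde F$. $Q^{(N)}$ is the form on $\ell^2(V,m)$ with domain $D(Q^{(N)})=\{u\in\ell^2(V,m):\frac12\sum_{x,y}b(x,y)|u(x)-u(y)|^2+\sum_x c(x)|u(x)|^2<\infty\}$ and $Q^{(N)}(u,v)=\frac12\sum_{x,y}b(x,y)(u(x)-u(y))\overline{(v(x)-v(y))}+\sum_x c(x)u(x)\overline{v(x)}$; it is non-negative, symmetric and closed, and $D(Q^{(N)})\subseteq\widetilde F$. $Q^{(D)}$ is the closure of the restriction of $Q^{(N)}$ to $C_c(V)$. Two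 forms are equal if they have the same domain and agree on it. *)

theory Defs
  imports "HOL-Analysis.Analysis"
begin

text \<open>Vertices: a type of class countable (finite or countably infinite set V).
  Functions on V are complex valued. A form on l2(V,m) is represented as a pair
  (domain, sesquilinear map).\<close>

type_synonym 'v form = "('v \<Rightarrow> complex) set \<times> (('v \<Rightarrow> complex) \<Rightarrow> ('v \<Rightarrow> complex) \<Rightarrow> complex)"

definition is_graph :: "('v \<Rightarrow> real) \<Rightarrow> ('v \<Rightarrow> 'v \<Rightarrow> real) \<Rightarrow> ('v \<Rightarrow> real) \<Rightarrow> bool" where
  "is_graph m b c \<longleftrightarrow> (\<forall>x. m x > 0) \<and> (\<forall>x. c x \<ge> 0) \<and> (\<forall>x y. b x y \<ge> 0)
     \<and> (\<forall>x. b x x = 0) \<and> (\<forall>x y. b x y = b y x) \<and> (\<forall>x. b x summable_on UNIV)"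

definition ell2 :: "('v \<Rightarrow> real) \<Rightarrow> ('v \<Rightarrow> complex) set" where
  "ell2 m = {u. (\<lambda>x. (cmod (u x))\<^sup>2 * m x) summable_on UNIV}"

definition ell2_norm :: "('v \<Rightarrow> real) \<Rightarrow> ('v \<Rightarrow> complex) \<Rightarrow> real" where
  "ell2_norm m u = sqrt (\<Sum>\<^sub>\<infinity>x. (cmod (u x))\<^sup>2 * m x)"

definition ell_infty :: "('v \<Rightarrow> complex) set" where
  "ell_infty = {u. \<exists>C. \<forall>x. cmod (u x) \<le> C}"

definition finsupp :: "('v \<Rightarrow> complex) set" where
  "finsupp = {u. finite {x. u x \<noteq> 0}}"

definition DQN :: "('v \<Rightarrow> real) \<Rightarrow> ('v \<Rightarrow> 'v \<Rightarrow> real) \<Rightarrow> ('v \<Rightarrow> real) \<Rightarrow> ('v \<Rightarrow> complex) set" where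
  "DQN m b c = {u. u \<in> ell2 m
      \<and> (\<lambda>(x,y). b x y * (cmod (u x - u y))\<^sup>2) summable_on UNIV
      \<and> (\<lambda>x. c x * (cmod (u x))\<^sup>2) summable_on UNIV}"

definition QNval :: "('v \<Rightarrow> 'v \<Rightarrow> real) \<Rightarrow> ('v \<Rightarrow> real) \<Rightarrow> ('v \<Rightarrow> complex) \<Rightarrow> ('v \<Rightarrow> complex) \<Rightarrow> complex" where
  "QNval b c u v =
     (1/2) * (\<Sum>\<^sub>\<infinity>(x,y). complex_of_real (b x y) * (u x - u y) * cnj (v x - v y))
     + (\<Sum>\<^sub>\<infinity>x. complex_of_real (c x) * u x * cnj (v x))"

definition QN :: "('v \<Rightarrow> real) \<Rightarrow> ('v \<Rightarrow> 'v \<Rightarrow> real) \<Rightarrow> ('v \<Rightarrow> real) \<Rightarrow> 'v form" where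
  "QN m b c = (DQN m b c, QNval b c)"

definition form_restrict :: "'v form \<Rightarrow> ('v \<Rightarrow> complex) set \<Rightarrow> 'v form" where
  "form_restrict q S = (fst q \<inter> S, snd q)"

definition approx_seq :: "('v \<Rightarrow> real) \<Rightarrow> 'v form \<Rightarrow> (nat \<Rightarrow> 'v \<Rightarrow> complex) \<Rightarrow> ('v \<Rightarrow> complex) \<Rightarrow> bool" where
  "approx_seq m q \<phi> u \<longleftrightarrow> (\<forall>n. \<phi> n \<in> fst q)
     \<and> (\<lambda>n. ell2_norm m (\<phi> n - u)) \<longlonglongrightarrow> 0
     \<and> (\<forall>e>0. \<exists>N. \<forall>n\<ge>N. \<forall>k\<ge>N. cmod (snd q (\<phi> n - \<phi> k) (\<phi> n - \<phi> k)) < e)"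

definition form_closure :: "('v \<Rightarrow> real) \<Rightarrow> 'v form \<Rightarrow> 'v form" where
  "form_closure m q =
     ({u \<in> ell2 m. \<exists>\<phi>. approx_seq m q \<phi> u},
      (\<lambda>u v. THE z. \<forall>\<phi> \<psi>. approx_seq m q \<phi> u \<longrightarrow> approx_seq m q \<psi> v
                 \<longrightarrow> (\<lambda>n. snd q (\<phi> n) (\<psi> n)) \<longlonglongrightarrow> z))"

definition QD :: "('v \<Rightarrow> real) \<Rightarrow> ('v \<Rightarrow> 'v \<Rightarrow> real) \<Rightarrow> ('v \<Rightarrow> real) \<Rightarrow> 'v form" where
  "QD m b c = form_closure m (form_restrict (QN m b c) finsupp)"

definition form_eq :: "'v form \<Rightarrow> 'v form \<Rightarrow> bool" where
  "form_eq q1 q2 \<longleftrightarrow> fst q1 = fst q2 \<and> (\<forall>u\<in>fst q1. \<forall>v\<in>fst q1. snd q1 u v = snd q2 u v)"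

definition Ftilde :: "('v \<Rightarrow> 'v \<Rightarrow> real) \<Rightarrow> ('v \<Rightarrow> complex) set" where
  "Ftilde b = {u. \<forall>x. (\<lambda>y. cmod (complex_of_real (b x y) * u y)) summable_on UNIV}"

definition Ltilde :: "('v \<Rightarrow> real) \<Rightarrow> ('v \<Rightarrow> 'v \<Rightarrow> real) \<Rightarrow> ('v \<Rightarrow> real) \<Rightarrow> ('v \<Rightarrow> complex) \<Rightarrow> 'v \<Rightarrow> complex" where
  "Ltilde m b c u x =
     (1 / complex_of_real (m x)) * (\<Sum>\<^sub>\<infinity>y. complex_of_real (b x y) * (u x - u y))
     + complex_of_real (c x / m x) * u x"

end

theory Submission
  imports Defs
begin

lemma fatou_real:
  fixes F :: "nat \<Rightarrow> 'a \<Rightarrow> real"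
  assumes nn: "\<And>k x. F k x \<ge> 0" and lim: "\<And>x. (\<lambda>k. F k x) \<longlonglongrightarrow> f x"
    and bd: "\<And>k. k \<ge> N \<Longrightarrow> F k summable_on UNIV \<and> infsum (F k) UNIV \<le> B"
  shows "f summable_on UNIV \<and> infsum f UNIV \<le> B"
proof -
  have fnn: "f x \<ge> 0" for x
    using lim[of x] nn by (meson LIMSEQ_le_const)
  have fs: "sum f S \<le> B" if "finite S" for S
  proof -
    have "(\<lambda>k. sum (F k) S) \<longlonglongrightarrow> sum f S"
      by (rule tendsto_sum) (use lim in auto)
    moreover have "\<forall>k\<ge>N. sum (F k) S \<le> B"
    proof (intro allI impI)
      fix k assume "k \<ge> N"
      hence "F k summable_on UNIV" "infsum (F k) UNIV \<le> B" using bd by auto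
      moreover have "sum (F k) S \<le> infsum (F k) UNIV"
        by (rule finite_sum_le_infsum) (use that nn \<open>F k summable_on UNIV\<close> in auto)
      ultimately show "sum (F k) S \<le> B" by linarith
    qed
    ultimately show ?thesis by (meson LIMSEQ_le_const2)
  qed
  have sm: "f summable_on UNIV"
  proof (rule nonneg_bdd_above_summable_on)
    show "bdd_above (sum f ` {F. F \<subseteq> UNIV \<and> finite F})"
      by (rule bdd_aboveI[where M=B]) (use fs in auto)
  qed (use fnn in auto)
  moreover have "infsum f UNIV \<le> B"
    by (rule infsum_le_finite_sums[OF sm]) (use fs in auto)
  ultimately show ?thesis by blast
qed

lemma infsum_split_finite:
  fixes f :: "'a \<Rightarrow> real"
  assumes "f summable_on UNIV" "finite S"
  shows "infsum f UNIV = sum f S + infsum f (UNIV - S)"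
proof -
  have "f summable_on (UNIV - S)" using assms summable_on_subset by blast
  hence "infsum f (S \<union> (UNIV - S)) = infsum f S + infsum f (UNIV - S)"
    by (intro infsum_Un_disjoint) (use assms in auto)
  thus ?thesis using assms by simp
qed

lemma dominated_real:
  fixes F :: "nat \<Rightarrow> 'a \<Rightarrow> real"
  assumes nn: "\<And>k x. 0 \<le> F k x" and le: "\<And>k x. F k x \<le> G x" and G: "G summable_on UNIV"
    and lim: "\<And>x. (\<lambda>k. F k x) \<longlonglongrightarrow> 0"
  shows "(\<lambda>k. infsum (F k) UNIV) \<longlonglongrightarrow> 0"
proof (rule LIMSEQ_I)
  fix r :: real assume r: "r > 0"
  obtain S where S: "finite S" "dist (sum G S) (infsum G UNIV) \<le> r/2"
    using infsum_finite_approximation[OF G, of "r/2"] r by auto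
  have Fs: "F k summable_on A" for k A
    using summable_on_comparison_test[OF G, of "F k"] nn le summable_on_subset by blast
  have GS: "infsum G (UNIV - S) \<le> r/2"
    using infsum_split_finite[OF G S(1)] S(2) by (simp add: dist_real_def)
  have "(\<lambda>k. sum (F k) S) \<longlonglongrightarrow> sum (\<lambda>x. 0) S"
    by (rule tendsto_sum) (use lim in auto)
  hence "(\<lambda>k. sum (F k) S) \<longlonglongrightarrow> 0" by simp
  then obtain N where N: "\<forall>k\<ge>N. norm (sum (F k) S - 0) < r/2"
    using LIMSEQ_D[of _ 0 "r/2"] r by (metis half_gt_zero)
  have "norm (infsum (F k) UNIV - 0) < r" if "k \<ge> N" for k
  proof -
    have "infsum (F k) UNIV = sum (F k) S + infsum (F k) (UNIV - S)"
      using infsum_split_finite[OF Fs S(1)] by simp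
    moreover have "infsum (F k) (UNIV - S) \<le> infsum G (UNIV - S)"
      by (rule infsum_mono) (use Fs summable_on_subset[OF G, of "UNIV - S"] le in auto)
    moreover have "infsum (F k) UNIV \<ge> 0" by (rule infsum_nonneg) (use nn in auto)
    ultimately show ?thesis using N that GS by auto
  qed
  thus "\<exists>N. \<forall>k\<ge>N. norm (infsum (F k) UNIV - 0) < r" by blast
qed


lemma sq_add_le: "(cmod (a + b))\<^sup>2 \<le> 2 * (cmod a)\<^sup>2 + 2 * (cmod (b::complex))\<^sup>2"
proof -
  have "cmod (a+b) \<le> cmod a + cmod b" by (rule norm_triangle_ineq)
  hence "(cmod (a+b))\<^sup>2 \<le> (cmod a + cmod b)\<^sup>2" by (simp add: power_mono)
  moreover have "0 \<le> (cmod a - cmod b)\<^sup>2" by simp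
  ultimately show ?thesis by (simp add: power2_eq_square algebra_simps)
qed

lemma sq_delta_le:
  assumes "d > 0"
  shows "(cmod (a + b))\<^sup>2 \<le> (1+d) * (cmod a)\<^sup>2 + (1 + 1/d) * (cmod (b::complex))\<^sup>2"
proof -
  have "cmod (a+b) \<le> cmod a + cmod b" by (rule norm_triangle_ineq)
  hence "(cmod (a+b))\<^sup>2 \<le> (cmod a + cmod b)\<^sup>2" by (simp add: power_mono)
  also have "\<dots> \<le> (1+d) * (cmod a)\<^sup>2 + (1 + 1/d) * (cmod b)\<^sup>2"
  proof -
    have "0 \<le> (d * cmod a - cmod b)\<^sup>2 / d" using assms by simp
    also have "\<dots> = d * (cmod a)\<^sup>2 - 2 * cmod a * cmod b + (cmod b)\<^sup>2 / d"
      using assms by (simp add: power2_eq_square field_simps)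
    finally show ?thesis by (simp add: power2_eq_square algebra_simps add_divide_distrib)
  qed
  finally show ?thesis .
qed

lemma parallelogram_c: "(cmod (a + b))\<^sup>2 + (cmod (a - b))\<^sup>2 = 2 * (cmod a)\<^sup>2 + 2 * (cmod (b::complex))\<^sup>2"
  by (simp only: cmod_power2) (simp add: power2_eq_square algebra_simps)

definition pt :: "('v \<Rightarrow> 'v \<Rightarrow> real) \<Rightarrow> ('v \<Rightarrow> complex) \<Rightarrow> 'v \<times> 'v \<Rightarrow> real" where
  "pt b f = (\<lambda>(x,y). b x y * (cmod (f x - f y))\<^sup>2)"
definition vt :: "('v \<Rightarrow> real) \<Rightarrow> ('v \<Rightarrow> complex) \<Rightarrow> 'v \<Rightarrow> real" where
  "vt c f = (\<lambda>x. c x * (cmod (f x))\<^sup>2)"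
definition mt :: "('v \<Rightarrow> real) \<Rightarrow> ('v \<Rightarrow> complex) \<Rightarrow> 'v \<Rightarrow> real" where
  "mt m f = (\<lambda>x. (cmod (f x))\<^sup>2 * m x)"

definition Qr where "Qr b c f = infsum (pt b f) UNIV / 2 + infsum (vt c f) UNIV"
definition Mr where "Mr m f = infsum (mt m f) UNIV"
definition En where "En m b c f = Qr b c f + Mr m f"

lemma DQN_iff: "u \<in> DQN m b c \<longleftrightarrow> mt m u summable_on UNIV \<and> pt b u summable_on UNIV \<and> vt c u summable_on UNIV"
  unfolding DQN_def ell2_def pt_def vt_def mt_def by auto

lemma ell2_iff: "u \<in> ell2 m \<longleftrightarrow> mt m u summable_on UNIV"
  unfolding ell2_def mt_def by auto

lemma ell2_norm_eq: "ell2_norm m u = sqrt (Mr m u)"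
  unfolding ell2_norm_def Mr_def mt_def by simp

context
  fixes m :: "'v \<Rightarrow> real" and b :: "'v \<Rightarrow> 'v \<Rightarrow> real" and c :: "'v \<Rightarrow> real"
  assumes G: "is_graph m b c"
begin

lemma mpos: "m x > 0" using G unfolding is_graph_def by auto
lemma cnn: "c x \<ge> 0" using G unfolding is_graph_def by auto
lemma bnn: "b x y \<ge> 0" using G unfolding is_graph_def by auto
lemma bdiag: "b x x = 0" using G unfolding is_graph_def by auto
lemma bsym: "b x y = b y x" using G unfolding is_graph_def by auto
lemma bsum: "b x summable_on UNIV" using G unfolding is_graph_def by auto

lemma pt_nn: "pt b f p \<ge> 0" unfolding pt_def by (auto simp: bnn split: prod.splits)
lemma vt_nn: "vt c f x \<ge> 0" unfolding vt_def by (auto simp: cnn)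
lemma mt_nn: "mt m f x \<ge> 0" unfolding mt_def using mpos[of x] by auto

lemma Ipt_nn: "infsum (pt b f) A \<ge> 0" by (rule infsum_nonneg) (use pt_nn in auto)
lemma Ivt_nn: "infsum (vt c f) A \<ge> 0" by (rule infsum_nonneg) (use vt_nn in auto)
lemma Imt_nn: "infsum (mt m f) A \<ge> 0" by (rule infsum_nonneg) (use mt_nn in auto)
lemma Qr_nn: "Qr b c f \<ge> 0" unfolding Qr_def using Ipt_nn[of f UNIV] Ivt_nn[of f UNIV] by auto
lemma Mr_nn: "Mr m f \<ge> 0" unfolding Mr_def using Imt_nn by auto
lemma En_nn: "En m b c f \<ge> 0" unfolding En_def using Qr_nn Mr_nn by (smt (verit))

lemma comb_part:
  fixes P :: "'a \<Rightarrow> real"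
  assumes "P summable_on UNIV" "R summable_on UNIV" "A \<ge> 0" "B \<ge> 0"
    and "\<And>x. 0 \<le> H x" "\<And>x. H x \<le> A * P x + B * R x"
  shows "H summable_on UNIV \<and> infsum H UNIV \<le> A * infsum P UNIV + B * infsum R UNIV"
proof -
  have s: "(\<lambda>x. A * P x + B * R x) summable_on UNIV"
    by (intro summable_on_add summable_on_cmult_right assms)
  have h: "H summable_on UNIV" by (rule summable_on_comparison_test[OF s]) (use assms in auto)
  have "infsum H UNIV \<le> infsum (\<lambda>x. A * P x + B * R x) UNIV"
    by (rule infsum_mono[OF h s]) (use assms in auto)
  also have "\<dots> = A * infsum P UNIV + B * infsum R UNIV"
    by (simp add: infsum_add infsum_cmult_right summable_on_cmult_right assms)
  finally show ?thesis using h by blast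
qed

lemma D_comb:
  assumes f: "f \<in> DQN m b c" and g: "g \<in> DQN m b c" and AB: "A \<ge> 0" "B \<ge> 0"
   and hxy: "\<And>x y. (cmod (h x - h y))\<^sup>2 \<le> A*(cmod (f x - f y))\<^sup>2 + B*(cmod (g x - g y))\<^sup>2"
   and hx: "\<And>x. (cmod (h x))\<^sup>2 \<le> A*(cmod (f x))\<^sup>2 + B*(cmod (g x))\<^sup>2"
  shows "h \<in> DQN m b c"
    "infsum (pt b h) UNIV \<le> A * infsum (pt b f) UNIV + B * infsum (pt b g) UNIV"
    "infsum (vt c h) UNIV \<le> A * infsum (vt c f) UNIV + B * infsum (vt c g) UNIV"
    "infsum (mt m h) UNIV \<le> A * infsum (mt m f) UNIV + B * infsum (mt m g) UNIV"
proof -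
  have P: "pt b h summable_on UNIV \<and> infsum (pt b h) UNIV \<le> A * infsum (pt b f) UNIV + B * infsum (pt b g) UNIV"
  proof (rule comb_part)
    fix p :: "'v \<times> 'v"
    obtain x y where p: "p = (x,y)" by (cases p)
    have "b x y * (cmod (h x - h y))\<^sup>2 \<le> b x y * (A*(cmod (f x - f y))\<^sup>2 + B*(cmod (g x - g y))\<^sup>2)"
      by (rule mult_left_mono[OF hxy bnn])
    thus "pt b h p \<le> A * pt b f p + B * pt b g p" unfolding pt_def p by (simp add: algebra_simps)
  qed (use f g AB in \<open>auto simp: DQN_iff intro: pt_nn\<close>)
  have V: "vt c h summable_on UNIV \<and> infsum (vt c h) UNIV \<le> A * infsum (vt c f) UNIV + B * infsum (vt c g) UNIV"
  proof (rule comb_part)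
    fix x
    have "c x * (cmod (h x))\<^sup>2 \<le> c x * (A*(cmod (f x))\<^sup>2 + B*(cmod (g x))\<^sup>2)"
      by (rule mult_left_mono[OF hx cnn])
    thus "vt c h x \<le> A * vt c f x + B * vt c g x" unfolding vt_def by (simp add: algebra_simps)
  qed (use f g AB in \<open>auto simp: DQN_iff intro: vt_nn\<close>)
  have M: "mt m h summable_on UNIV \<and> infsum (mt m h) UNIV \<le> A * infsum (mt m f) UNIV + B * infsum (mt m g) UNIV"
  proof (rule comb_part)
    fix x
    have "(cmod (h x))\<^sup>2 * m x \<le> (A*(cmod (f x))\<^sup>2 + B*(cmod (g x))\<^sup>2) * m x"
      by (rule mult_right_mono[OF hx]) (use mpos[of x] in auto)
    thus "mt m h x \<le> A * mt m f x + B * mt m g x" unfolding mt_def by (simp add: algebra_simps)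
  qed (use f g AB in \<open>auto simp: DQN_iff intro: mt_nn\<close>)
  show "h \<in> DQN m b c" using P V M DQN_iff by blast
  show "infsum (pt b h) UNIV \<le> A * infsum (pt b f) UNIV + B * infsum (pt b g) UNIV" using P by blast
  show "infsum (vt c h) UNIV \<le> A * infsum (vt c f) UNIV + B * infsum (vt c g) UNIV" using V by blast
  show "infsum (mt m h) UNIV \<le> A * infsum (mt m f) UNIV + B * infsum (mt m g) UNIV" using M by blast
qed

lemma D_comb_E:
  assumes f: "f \<in> DQN m b c" and g: "g \<in> DQN m b c" and AB: "A \<ge> 0" "B \<ge> 0"
   and hxy: "\<And>x y. (cmod (h x - h y))\<^sup>2 \<le> A*(cmod (f x - f y))\<^sup>2 + B*(cmod (g x - g y))\<^sup>2"
   and hx: "\<And>x. (cmod (h x))\<^sup>2 \<le> A*(cmod (f x))\<^sup>2 + B*(cmod (g x))\<^sup>2"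
  shows "h \<in> DQN m b c" "Qr b c h \<le> A * Qr b c f + B * Qr b c g" "Mr m h \<le> A * Mr m f + B * Mr m g"
    "En m b c h \<le> A * En m b c f + B * En m b c g"
  using D_comb[OF assms] unfolding Qr_def Mr_def En_def by (auto simp: algebra_simps)

lemma D_zero: "(\<lambda>_. 0) \<in> DQN m b c"
proof -
  have "(\<lambda>(x::'v,y::'v). 0::real) = (\<lambda>_. 0)" by auto
  thus ?thesis unfolding DQN_iff pt_def vt_def mt_def by auto
qed

lemma D_contract:
  assumes f: "f \<in> DQN m b c"
   and hxy: "\<And>x y. cmod (h x - h y) \<le> cmod (f x - f y)"
   and hx: "\<And>x. cmod (h x) \<le> cmod (f x)"
  shows "h \<in> DQN m b c" "Qr b c h \<le> Qr b c f" "Mr m h \<le> Mr m f" "En m b c h \<le> En m b c f"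
  using D_comb_E[OF f f, of 1 0 h] hxy hx by (auto intro: power_mono)

lemma D_add:
  assumes f: "f \<in> DQN m b c" and g: "g \<in> DQN m b c"
  shows "(\<lambda>x. f x + g x) \<in> DQN m b c" "Qr b c (\<lambda>x. f x + g x) \<le> 2 * Qr b c f + 2 * Qr b c g"
    "Mr m (\<lambda>x. f x + g x) \<le> 2 * Mr m f + 2 * Mr m g" "En m b c (\<lambda>x. f x + g x) \<le> 2 * En m b c f + 2 * En m b c g"
proof -
  have a: "(cmod ((\<lambda>x. f x + g x) x - (\<lambda>x. f x + g x) y))\<^sup>2 \<le> 2*(cmod (f x - f y))\<^sup>2 + 2*(cmod (g x - g y))\<^sup>2" for x y
    using sq_add_le[of "f x - f y" "g x - g y"] by (simp add: algebra_simps)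
  have b: "(cmod ((\<lambda>x. f x + g x) x))\<^sup>2 \<le> 2*(cmod (f x))\<^sup>2 + 2*(cmod (g x))\<^sup>2" for x
    using sq_add_le[of "f x" "g x"] by simp
  show "(\<lambda>x. f x + g x) \<in> DQN m b c" "Qr b c (\<lambda>x. f x + g x) \<le> 2 * Qr b c f + 2 * Qr b c g"
    "Mr m (\<lambda>x. f x + g x) \<le> 2 * Mr m f + 2 * Mr m g" "En m b c (\<lambda>x. f x + g x) \<le> 2 * En m b c f + 2 * En m b c g"
    using D_comb_E[OF f g, of 2 2 "\<lambda>x. f x + g x"] a b by auto
qed

lemma D_diff:
  assumes f: "f \<in> DQN m b c" and g: "g \<in> DQN m b c"
  shows "(\<lambda>x. f x - g x) \<in> DQN m b c" "Qr b c (\<lambda>x. f x - g x) \<le> 2 * Qr b c f + 2 * Qr b c g"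
    "Mr m (\<lambda>x. f x - g x) \<le> 2 * Mr m f + 2 * Mr m g" "En m b c (\<lambda>x. f x - g x) \<le> 2 * En m b c f + 2 * En m b c g"
proof -
  have a: "(cmod ((\<lambda>x. f x - g x) x - (\<lambda>x. f x - g x) y))\<^sup>2 \<le> 2*(cmod (f x - f y))\<^sup>2 + 2*(cmod (g x - g y))\<^sup>2" for x y
  proof -
    have e: "f x - g x - (f y - g y) = (f x - f y) + -(g x - g y)" by simp
    show ?thesis using sq_add_le[of "f x - f y" "-(g x - g y)"] unfolding e norm_minus_cancel by simp
  qed
  have b: "(cmod ((\<lambda>x. f x - g x) x))\<^sup>2 \<le> 2*(cmod (f x))\<^sup>2 + 2*(cmod (g x))\<^sup>2" for x
    using sq_add_le[of "f x" "- g x"] by simp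
  show "(\<lambda>x. f x - g x) \<in> DQN m b c" "Qr b c (\<lambda>x. f x - g x) \<le> 2 * Qr b c f + 2 * Qr b c g"
    "Mr m (\<lambda>x. f x - g x) \<le> 2 * Mr m f + 2 * Mr m g" "En m b c (\<lambda>x. f x - g x) \<le> 2 * En m b c f + 2 * En m b c g"
    using D_comb_E[OF f g, of 2 2 "\<lambda>x. f x - g x"] a b by auto
qed

lemma D_scale:
  assumes f: "f \<in> DQN m b c"
  shows "(\<lambda>x. s * f x) \<in> DQN m b c" "Qr b c (\<lambda>x. s * f x) = (cmod s)\<^sup>2 * Qr b c f"
     "Mr m (\<lambda>x. s * f x) = (cmod s)\<^sup>2 * Mr m f" "En m b c (\<lambda>x. s * f x) = (cmod s)\<^sup>2 * En m b c f"
proof -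
  have p: "pt b (\<lambda>x. s * f x) = (\<lambda>p. (cmod s)\<^sup>2 * pt b f p)"
    by (auto simp: pt_def fun_eq_iff right_diff_distrib[symmetric] norm_mult power_mult_distrib)
  have v: "vt c (\<lambda>x. s * f x) = (\<lambda>p. (cmod s)\<^sup>2 * vt c f p)"
    by (auto simp: vt_def fun_eq_iff norm_mult power_mult_distrib)
  have w: "mt m (\<lambda>x. s * f x) = (\<lambda>p. (cmod s)\<^sup>2 * mt m f p)"
    by (auto simp: mt_def fun_eq_iff norm_mult power_mult_distrib)
  show "(\<lambda>x. s * f x) \<in> DQN m b c" using f unfolding DQN_iff p v w by (auto intro: summable_on_cmult_right)
  show "Qr b c (\<lambda>x. s * f x) = (cmod s)\<^sup>2 * Qr b c f" unfolding Qr_def p v infsum_cmult_right'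
    by (simp add: algebra_simps)
  show "Mr m (\<lambda>x. s * f x) = (cmod s)\<^sup>2 * Mr m f" unfolding Mr_def w infsum_cmult_right'
    by simp
  thus "En m b c (\<lambda>x. s * f x) = (cmod s)\<^sup>2 * En m b c f"
    unfolding En_def using \<open>Qr b c (\<lambda>x. s * f x) = (cmod s)\<^sup>2 * Qr b c f\<close> by (simp add: algebra_simps)
qed

lemma D_parallelogram:
  assumes f: "f \<in> DQN m b c" and g: "g \<in> DQN m b c"
  shows "En m b c (\<lambda>x. f x + g x) + En m b c (\<lambda>x. f x - g x) = 2 * En m b c f + 2 * En m b c g"
proof -
  note S = D_add(1)[OF f g] D_diff(1)[OF f g]
  have p: "pt b (\<lambda>x. f x + g x) p + pt b (\<lambda>x. f x - g x) p = 2 * pt b f p + 2 * pt b g p" for p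
  proof -
    obtain x y where pp: "p = (x,y)" by (cases p)
    have e1: "(f x + g x) - (f y + g y) = (f x - f y) + (g x - g y)" by simp
    have e2: "(f x - g x) - (f y - g y) = (f x - f y) - (g x - g y)" by simp
    have "b x y * (cmod ((f x - f y) + (g x - g y)))\<^sup>2 + b x y * (cmod ((f x - f y) - (g x - g y)))\<^sup>2
       = 2 * (b x y * (cmod (f x - f y))\<^sup>2) + 2 * (b x y * (cmod (g x - g y))\<^sup>2)"
      using arg_cong[OF parallelogram_c[of "f x - f y" "g x - g y"], of "\<lambda>t. b x y * t"] by (simp add: algebra_simps)
    thus ?thesis unfolding pp pt_def by (simp only: prod.case e1 e2)
  qed
  have v: "vt c (\<lambda>x. f x + g x) p + vt c (\<lambda>x. f x - g x) p = 2 * vt c f p + 2 * vt c g p" for p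
    using arg_cong[OF parallelogram_c[of "f p" "g p"], of "\<lambda>t. c p * t"] by (simp add: vt_def algebra_simps)
  have w: "mt m (\<lambda>x. f x + g x) p + mt m (\<lambda>x. f x - g x) p = 2 * mt m f p + 2 * mt m g p" for p
    using arg_cong[OF parallelogram_c[of "f p" "g p"], of "\<lambda>t. t * m p"] by (simp add: mt_def algebra_simps)
  have P: "infsum (pt b (\<lambda>x. f x + g x)) UNIV + infsum (pt b (\<lambda>x. f x - g x)) UNIV = 2 * infsum (pt b f) UNIV + 2 * infsum (pt b g) UNIV"
  proof -
    have "infsum (pt b (\<lambda>x. f x + g x)) UNIV + infsum (pt b (\<lambda>x. f x - g x)) UNIV = infsum (\<lambda>p. pt b (\<lambda>x. f x + g x) p + pt b (\<lambda>x. f x - g x) p) UNIV"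
      using S by (simp add: DQN_iff infsum_add)
    also have "\<dots> = infsum (\<lambda>p. 2 * pt b f p + 2 * pt b g p) UNIV" using p by simp
    also have "\<dots> = 2 * infsum (pt b f) UNIV + 2 * infsum (pt b g) UNIV"
      using f g by (simp add: DQN_iff infsum_add infsum_cmult_right summable_on_cmult_right)
    finally show ?thesis .
  qed
  have V: "infsum (vt c (\<lambda>x. f x + g x)) UNIV + infsum (vt c (\<lambda>x. f x - g x)) UNIV = 2 * infsum (vt c f) UNIV + 2 * infsum (vt c g) UNIV"
  proof -
    have "infsum (vt c (\<lambda>x. f x + g x)) UNIV + infsum (vt c (\<lambda>x. f x - g x)) UNIV = infsum (\<lambda>p. vt c (\<lambda>x. f x + g x) p + vt c (\<lambda>x. f x - g x) p) UNIV"
      using S by (simp add: DQN_iff infsum_add)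
    also have "\<dots> = infsum (\<lambda>p. 2 * vt c f p + 2 * vt c g p) UNIV" using v by simp
    also have "\<dots> = 2 * infsum (vt c f) UNIV + 2 * infsum (vt c g) UNIV"
      using f g by (simp add: DQN_iff infsum_add infsum_cmult_right summable_on_cmult_right)
    finally show ?thesis .
  qed
  have W: "infsum (mt m (\<lambda>x. f x + g x)) UNIV + infsum (mt m (\<lambda>x. f x - g x)) UNIV = 2 * infsum (mt m f) UNIV + 2 * infsum (mt m g) UNIV"
  proof -
    have "infsum (mt m (\<lambda>x. f x + g x)) UNIV + infsum (mt m (\<lambda>x. f x - g x)) UNIV = infsum (\<lambda>p. mt m (\<lambda>x. f x + g x) p + mt m (\<lambda>x. f x - g x) p) UNIV"
      using S by (simp add: DQN_iff infsum_add)
    also have "\<dots> = infsum (\<lambda>p. 2 * mt m f p + 2 * mt m g p) UNIV" using w by simp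
    also have "\<dots> = 2 * infsum (mt m f) UNIV + 2 * infsum (mt m g) UNIV"
      using f g by (simp add: DQN_iff infsum_add infsum_cmult_right summable_on_cmult_right)
    finally show ?thesis .
  qed
  show ?thesis using P V W unfolding En_def Qr_def Mr_def by (simp add: algebra_simps)
qed

end

lemma summable_Sigma_finite:
  fixes F :: "'a \<times> 'b \<Rightarrow> real"
  assumes "finite S" "\<And>x. x \<in> S \<Longrightarrow> (\<lambda>y. F (x,y)) summable_on UNIV"
  shows "F summable_on (S \<times> UNIV)"
  using assms
proof (induction S rule: finite_induct)
  case empty thus ?case by simp
next
  case (insert x S)
  have a: "F summable_on (S \<times> UNIV)" using insert by auto
  have "(F \<circ> Pair x) summable_on UNIV" using insert(4)[of x] by (simp add: o_def)
  hence b: "F summable_on (Pair x ` UNIV)" by (subst summable_on_reindex) (auto intro: inj_onI)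
  have "insert x S \<times> UNIV = (S \<times> UNIV) \<union> Pair x ` UNIV" by auto
  thus ?case using summable_on_union[OF a b] by metis
qed

lemma summable_extend_zero:
  fixes f :: "'a \<Rightarrow> real"
  assumes "f summable_on S" "\<And>x. x \<notin> S \<Longrightarrow> f x = 0"
  shows "f summable_on UNIV"
proof -
  have "f summable_on S \<longleftrightarrow> f summable_on UNIV"
    by (rule summable_on_cong_neutral) (use assms in auto)
  thus ?thesis using assms by blast
qed

lemma summable_finite_support:
  fixes f :: "'a \<Rightarrow> real"
  assumes "finite S" "\<And>x. x \<notin> S \<Longrightarrow> f x = 0"
  shows "f summable_on UNIV"
  by (rule summable_extend_zero[of f S]) (use assms in auto)

context
  fixes m :: "'v \<Rightarrow> real" and b :: "'v \<Rightarrow> 'v \<Rightarrow> real" and c :: "'v \<Rightarrow> real"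
  assumes G: "is_graph m b c"
begin

lemma finsupp_D:
  assumes "\<phi> \<in> finsupp"
  shows "\<phi> \<in> DQN m b c"
proof -
  define S where "S = {x. \<phi> x \<noteq> 0}"
  have S: "finite S" using assms unfolding finsupp_def S_def by auto
  have z: "x \<notin> S \<Longrightarrow> \<phi> x = 0" for x unfolding S_def by auto
  have M: "mt m \<phi> summable_on UNIV"
    by (rule summable_finite_support[OF S]) (auto simp: mt_def z)
  have V: "vt c \<phi> summable_on UNIV"
    by (rule summable_finite_support[OF S]) (auto simp: vt_def z)
  define g1 where "g1 = (\<lambda>p. b (fst p) (snd p) * (cmod (\<phi> (fst p)))\<^sup>2)"
  have g1S: "g1 summable_on (S \<times> UNIV)"
    by (rule summable_Sigma_finite[OF S])
       (auto simp: g1_def intro!: summable_on_cmult_left bsum[OF G])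
  have g1: "g1 summable_on UNIV"
  proof (rule summable_extend_zero[OF g1S])
    fix p :: "'v \<times> 'v" assume "p \<notin> S \<times> UNIV"
    hence "fst p \<notin> S" by (cases p) auto
    thus "g1 p = 0" by (simp add: g1_def z)
  qed
  have g2: "(g1 \<circ> prod.swap) summable_on UNIV"
  proof -
    have bj: "bij_betw prod.swap (UNIV::('v\<times>'v) set) UNIV" by (rule bij_betwI[where g=prod.swap]) auto
    show ?thesis using summable_on_reindex_bij_betw[OF bj, of g1] g1 by (simp add: o_def)
  qed
  have P: "pt b \<phi> summable_on UNIV"
  proof (rule summable_on_comparison_test)
    show "(\<lambda>p. 2 * g1 p + 2 * (g1 \<circ> prod.swap) p) summable_on UNIV"
      by (intro summable_on_add summable_on_cmult_right g1 g2)
    fix p :: "'v \<times> 'v"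
    obtain x y where pp: "p = (x,y)" by (cases p)
    show "0 \<le> pt b \<phi> p" by (rule pt_nn[OF G])
    have "b x y * (cmod (\<phi> x - \<phi> y))\<^sup>2 \<le> b x y * (2 * (cmod (\<phi> x))\<^sup>2 + 2 * (cmod (\<phi> y))\<^sup>2)"
      by (rule mult_left_mono[OF _ bnn[OF G]]) (use sq_add_le[of "\<phi> x" "- \<phi> y"] in simp)
    moreover have "pt b \<phi> p = b x y * (cmod (\<phi> x - \<phi> y))\<^sup>2" unfolding pp pt_def by simp
    moreover have "2 * g1 p + 2 * (g1 \<circ> prod.swap) p = 2 * (b x y * (cmod (\<phi> x))\<^sup>2) + 2 * (b x y * (cmod (\<phi> y))\<^sup>2)"
      unfolding pp g1_def using bsym[OF G, of y x] by simp
    ultimately show "pt b \<phi> p \<le> 2 * g1 p + 2 * (g1 \<circ> prod.swap) p" by (simp add: algebra_simps)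
  qed
  show ?thesis using M V P DQN_iff by blast
qed

lemma infsum_of_real_c:
  fixes f :: "'a \<Rightarrow> real"
  assumes "f summable_on A"
  shows "infsum (\<lambda>x. complex_of_real (f x)) A = complex_of_real (infsum f A)"
  by (rule infsumI[OF has_sum_of_real[OF has_sum_infsum[OF assms]]])

lemma QN_self:
  assumes "f \<in> DQN m b c"
  shows "QNval b c f f = complex_of_real (Qr b c f)"
proof -
  have e1: "(\<lambda>(x,y). complex_of_real (b x y) * (f x - f y) * cnj (f x - f y)) = (\<lambda>p. complex_of_real (pt b f p))"
  proof (rule ext, clarify)
    fix x y
    show "complex_of_real (b x y) * (f x - f y) * cnj (f x - f y) = complex_of_real (pt b f (x,y))"
      unfolding pt_def prod.case by (simp only: mult.assoc complex_norm_square of_real_mult)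
  qed
  have e2: "(\<lambda>x. complex_of_real (c x) * f x * cnj (f x)) = (\<lambda>p. complex_of_real (vt c f p))"
  proof (rule ext)
    fix x
    show "complex_of_real (c x) * f x * cnj (f x) = complex_of_real (vt c f x)"
      unfolding vt_def by (simp only: mult.assoc complex_norm_square of_real_mult)
  qed
  show ?thesis using assms unfolding QNval_def e1 e2 Qr_def
    by (simp add: DQN_iff infsum_of_real_c)
qed

end

lemma pol_point:
  fixes a b' :: complex
  shows "a * cnj b' = (1/4) * (complex_of_real ((cmod (a+b'))\<^sup>2) - complex_of_real ((cmod (a-b'))\<^sup>2)
     + \<i> * complex_of_real ((cmod (a + \<i>*b'))\<^sup>2) - \<i> * complex_of_real ((cmod (a - \<i>*b'))\<^sup>2))"
  by (simp only: cmod_power2) (simp add: complex_eq_iff power2_eq_square algebra_simps)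

lemma lin4:
  fixes A B C D :: "'a \<Rightarrow> complex"
  assumes "A summable_on UNIV" "B summable_on UNIV" "C summable_on UNIV" "D summable_on UNIV"
  shows "infsum (\<lambda>p. (1/4) * (A p - B p + \<i> * C p - \<i> * D p)) UNIV
       = (1/4) * (infsum A UNIV - infsum B UNIV + \<i> * infsum C UNIV - \<i> * infsum D UNIV)"
proof -
  have hA: "(A has_sum infsum A UNIV) UNIV" using assms by (simp add: has_sum_infsum)
  have hB: "((\<lambda>p. - B p) has_sum - infsum B UNIV) UNIV" using assms by (intro has_sum_uminus[THEN iffD2]) (simp add: has_sum_infsum)
  have hC: "((\<lambda>p. \<i> * C p) has_sum \<i> * infsum C UNIV) UNIV" using assms by (intro has_sum_cmult_right) (simp add: has_sum_infsum)
  have hD0: "((\<lambda>p. \<i> * D p) has_sum \<i> * infsum D UNIV) UNIV"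
    by (rule has_sum_cmult_right) (simp add: has_sum_infsum assms)
  have hD: "((\<lambda>p. - (\<i> * D p)) has_sum - (\<i> * infsum D UNIV)) UNIV"
    using hD0 by (simp add: has_sum_uminus)
  have "((\<lambda>p. A p + - B p + \<i> * C p + - (\<i> * D p)) has_sum
      (infsum A UNIV + - infsum B UNIV + \<i> * infsum C UNIV + - (\<i> * infsum D UNIV))) UNIV"
    by (intro has_sum_add hA hB hC hD)
  hence "((\<lambda>p. (1/4) * (A p + - B p + \<i> * C p + - (\<i> * D p))) has_sum
      (1/4) * (infsum A UNIV + - infsum B UNIV + \<i> * infsum C UNIV + - (\<i> * infsum D UNIV))) UNIV"
    by (rule has_sum_cmult_right)
  thus ?thesis by (simp add: infsumI)
qed

context
  fixes m :: "'v \<Rightarrow> real" and b :: "'v \<Rightarrow> 'v \<Rightarrow> real" and c :: "'v \<Rightarrow> real"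
  assumes G: "is_graph m b c"
begin

lemma QN_pol:
  assumes f: "f \<in> DQN m b c" and g: "g \<in> DQN m b c"
  shows "QNval b c f g = (1/4) * (complex_of_real (Qr b c (\<lambda>x. f x + g x)) - complex_of_real (Qr b c (\<lambda>x. f x - g x))
     + \<i> * complex_of_real (Qr b c (\<lambda>x. f x + \<i> * g x)) - \<i> * complex_of_real (Qr b c (\<lambda>x. f x - \<i> * g x)))"
proof -
  have ig: "(\<lambda>x. \<i> * g x) \<in> DQN m b c" by (rule D_scale(1)[OF G g])
  have D1: "(\<lambda>x. f x + g x) \<in> DQN m b c" by (rule D_add(1)[OF G f g])
  have D2: "(\<lambda>x. f x - g x) \<in> DQN m b c" by (rule D_diff(1)[OF G f g])
  have D3: "(\<lambda>x. f x + \<i> * g x) \<in> DQN m b c" using D_add(1)[OF G f ig] by simp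
  have D4: "(\<lambda>x. f x - \<i> * g x) \<in> DQN m b c" using D_diff(1)[OF G f ig] by simp
  note S = D1 D2 D3 D4
  have P: "(\<Sum>\<^sub>\<infinity>(x,y). complex_of_real (b x y) * (f x - g x - (f y - g y)) * 0 + complex_of_real (b x y) * (f x - f y) * cnj (g x - g y))
     = (\<Sum>\<^sub>\<infinity>(x,y). complex_of_real (b x y) * (f x - f y) * cnj (g x - g y))" by simp
  have ep: "(\<lambda>(x,y). complex_of_real (b x y) * (f x - f y) * cnj (g x - g y)) =
     (\<lambda>p. (1/4) * (complex_of_real (pt b (\<lambda>x. f x + g x) p) - complex_of_real (pt b (\<lambda>x. f x - g x) p)
       + \<i> * complex_of_real (pt b (\<lambda>x. f x + \<i> * g x) p) - \<i> * complex_of_real (pt b (\<lambda>x. f x - \<i> * g x) p)))"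
  proof (rule ext, clarify)
    fix x y
    have e1: "f x + g x - (f y + g y) = (f x - f y) + (g x - g y)" by simp
    have e2: "f x - g x - (f y - g y) = (f x - f y) - (g x - g y)" by simp
    have e3: "f x + \<i> * g x - (f y + \<i> * g y) = (f x - f y) + \<i> * (g x - g y)" by (simp add: algebra_simps)
    have e4: "f x - \<i> * g x - (f y - \<i> * g y) = (f x - f y) - \<i> * (g x - g y)" by (simp add: algebra_simps)
    show "complex_of_real (b x y) * (f x - f y) * cnj (g x - g y) = (1/4) * (complex_of_real (pt b (\<lambda>x. f x + g x) (x,y)) - complex_of_real (pt b (\<lambda>x. f x - g x) (x,y))
       + \<i> * complex_of_real (pt b (\<lambda>x. f x + \<i> * g x) (x,y)) - \<i> * complex_of_real (pt b (\<lambda>x. f x - \<i> * g x) (x,y)))"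
      unfolding pt_def prod.case e1 e2 e3 e4 mult.assoc pol_point[of "f x - f y" "g x - g y"]
      by (simp add: algebra_simps)
  qed
  have ev: "(\<lambda>x. complex_of_real (c x) * f x * cnj (g x)) =
     (\<lambda>p. (1/4) * (complex_of_real (vt c (\<lambda>x. f x + g x) p) - complex_of_real (vt c (\<lambda>x. f x - g x) p)
       + \<i> * complex_of_real (vt c (\<lambda>x. f x + \<i> * g x) p) - \<i> * complex_of_real (vt c (\<lambda>x. f x - \<i> * g x) p)))"
  proof (rule ext)
    fix x
    show "complex_of_real (c x) * f x * cnj (g x) = (1/4) * (complex_of_real (vt c (\<lambda>x. f x + g x) x) - complex_of_real (vt c (\<lambda>x. f x - g x) x)
       + \<i> * complex_of_real (vt c (\<lambda>x. f x + \<i> * g x) x) - \<i> * complex_of_real (vt c (\<lambda>x. f x - \<i> * g x) x))"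
      unfolding vt_def mult.assoc pol_point[of "f x" "g x"]
      by (simp add: algebra_simps)
  qed
  have sp: "(\<lambda>p. complex_of_real (pt b h p)) summable_on UNIV" if "h \<in> DQN m b c" for h
    using that by (intro summable_on_of_real) (simp add: DQN_iff)
  have sv: "(\<lambda>p. complex_of_real (vt c h p)) summable_on UNIV" if "h \<in> DQN m b c" for h
    using that by (intro summable_on_of_real) (simp add: DQN_iff)
  have ip: "infsum (\<lambda>p. complex_of_real (pt b h p)) UNIV = complex_of_real (infsum (pt b h) UNIV)" if "h \<in> DQN m b c" for h
    using that by (intro infsum_of_real_c[OF G]) (simp add: DQN_iff)
  have iv: "infsum (\<lambda>p. complex_of_real (vt c h p)) UNIV = complex_of_real (infsum (vt c h) UNIV)" if "h \<in> DQN m b c" for h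
    using that by (intro infsum_of_real_c[OF G]) (simp add: DQN_iff)
  show ?thesis
    unfolding QNval_def ep ev lin4[OF sp[OF D1] sp[OF D2] sp[OF D3] sp[OF D4]]
      lin4[OF sv[OF D1] sv[OF D2] sv[OF D3] sv[OF D4]] ip[OF D1] ip[OF D2] ip[OF D3] ip[OF D4]
      iv[OF D1] iv[OF D2] iv[OF D3] iv[OF D4] Qr_def
    by (simp add: algebra_simps)
qed

end

lemma sandwich_Q:
  fixes x e :: "nat \<Rightarrow> real"
  assumes e0: "e \<longlonglongrightarrow> 0" and enn: "\<And>n. e n \<ge> 0" and a0: "a \<ge> 0"
    and up: "\<And>n d. d > 0 \<Longrightarrow> x n \<le> (1+d)*a + (1+1/d)*e n"
    and lo: "\<And>n d. d > 0 \<Longrightarrow> a \<le> (1+d)*x n + (1+1/d)*e n"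
  shows "x \<longlonglongrightarrow> a"
proof -
  define d where "d n = sqrt (e n) + 1/(real n + 1)" for n
  have dpos: "d n > 0" for n unfolding d_def by (rule add_nonneg_pos[OF real_sqrt_ge_zero[OF enn]]) simp
  have ed: "(1 + 1/d n) * e n \<le> e n + sqrt (e n)" for n
  proof -
    have "e n = sqrt (e n) * sqrt (e n)" using enn by simp
    also have "\<dots> \<le> sqrt (e n) * d n" unfolding d_def by (intro mult_left_mono) (auto simp: enn)
    finally have "e n / d n \<le> sqrt (e n)" using dpos[of n] by (simp add: divide_le_eq)
    thus ?thesis by (simp add: algebra_simps)
  qed
  have d0: "d \<longlonglongrightarrow> 0"
  proof -
    have "(\<lambda>n. sqrt (e n)) \<longlonglongrightarrow> sqrt 0" by (intro tendsto_real_sqrt e0)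
    moreover have "(\<lambda>n. 1 / (real n + 1)) \<longlonglongrightarrow> 0" using LIMSEQ_inverse_real_of_nat by (simp add: inverse_eq_divide add.commute)
    ultimately show ?thesis unfolding d_def using tendsto_add by fastforce
  qed
  have s0: "(\<lambda>n. sqrt (e n)) \<longlonglongrightarrow> 0" using tendsto_real_sqrt[OF e0] by simp
  define U where "U n = d n * a + e n + sqrt (e n)" for n
  define L where "L n = d n * ((1 + d n) * a + e n + sqrt (e n)) + e n + sqrt (e n)" for n
  have U0: "U \<longlonglongrightarrow> 0" unfolding U_def using d0 e0 s0 by (auto intro!: tendsto_eq_intros)
  have L0: "(\<lambda>n. - L n) \<longlonglongrightarrow> 0" unfolding L_def using d0 e0 s0 by (auto intro!: tendsto_eq_intros)
  have xu: "x n - a \<le> U n" for n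
    using up[of "d n" n, OF dpos[of n]] ed[of n] unfolding U_def by (simp add: algebra_simps)
  have xb: "x n \<le> (1 + d n) * a + e n + sqrt (e n)" for n
    using up[of "d n" n, OF dpos[of n]] ed[of n] by (simp add: algebra_simps)
  have xl: "- L n \<le> x n - a" for n
  proof -
    have "a \<le> (1 + d n) * x n + e n + sqrt (e n)" using lo[of "d n" n, OF dpos[of n]] ed[of n] by linarith
    moreover have "d n * x n \<le> d n * ((1 + d n) * a + e n + sqrt (e n))"
      by (rule mult_left_mono[OF xb]) (use dpos[of n] in auto)
    ultimately show ?thesis unfolding L_def by (simp add: algebra_simps)
  qed
  have "(\<lambda>n. x n - a) \<longlonglongrightarrow> 0"
    by (rule tendsto_sandwich[OF _ _ L0 U0]) (use xl xu in auto)
  thus ?thesis by (simp add: LIM_zero_iff)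
qed

context
  fixes m :: "'v \<Rightarrow> real" and b :: "'v \<Rightarrow> 'v \<Rightarrow> real" and c :: "'v \<Rightarrow> real"
  assumes G: "is_graph m b c"
begin

lemma Qr_delta:
  assumes f: "f \<in> DQN m b c" and g: "g \<in> DQN m b c" and d: "d > 0"
  shows "Qr b c (\<lambda>x. f x + g x) \<le> (1+d) * Qr b c f + (1 + 1/d) * Qr b c g"
proof -
  have a: "(cmod ((f x + g x) - (f y + g y)))\<^sup>2 \<le> (1+d)*(cmod (f x - f y))\<^sup>2 + (1+1/d)*(cmod (g x - g y))\<^sup>2" for x y
  proof -
    have e: "(f x + g x) - (f y + g y) = (f x - f y) + (g x - g y)" by simp
    show ?thesis unfolding e by (rule sq_delta_le[OF d])
  qed
  show ?thesis using D_comb_E(2)[OF G f g, of "1+d" "1+1/d" "\<lambda>x. f x + g x"] a sq_delta_le[OF d] d by auto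
qed

lemma Qr_cont:
  assumes h: "\<And>n. h n \<in> DQN m b c" and h0: "h0 \<in> DQN m b c"
    and lim: "(\<lambda>n. Qr b c (\<lambda>x. h n x - h0 x)) \<longlonglongrightarrow> 0"
  shows "(\<lambda>n. Qr b c (h n)) \<longlonglongrightarrow> Qr b c h0"
proof (rule sandwich_Q[OF lim Qr_nn[OF G] Qr_nn[OF G]])
  fix n and d :: real assume d: "d > 0"
  have hd: "(\<lambda>x. h n x - h0 x) \<in> DQN m b c" by (rule D_diff(1)[OF G h h0])
  show "Qr b c (h n) \<le> (1 + d) * Qr b c h0 + (1 + 1 / d) * Qr b c (\<lambda>x. h n x - h0 x)"
    using Qr_delta[OF h0 hd d] by simp
  have hd': "(\<lambda>x. h0 x - h n x) \<in> DQN m b c" by (rule D_diff(1)[OF G h0 h])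
  have "Qr b c (\<lambda>x. h0 x - h n x) = Qr b c (\<lambda>x. (-1) * (h n x - h0 x))" by (simp add: algebra_simps)
  also have "\<dots> = Qr b c (\<lambda>x. h n x - h0 x)" using D_scale(2)[OF G hd, of "-1"] by simp
  finally have eq: "Qr b c (\<lambda>x. h0 x - h n x) = Qr b c (\<lambda>x. h n x - h0 x)" .
  show "Qr b c h0 \<le> (1 + d) * Qr b c (h n) + (1 + 1 / d) * Qr b c (\<lambda>x. h n x - h0 x)"
    using Qr_delta[OF h hd' d, of n] eq by simp
qed

lemma ell2_diff:
  assumes "u \<in> ell2 m" "v \<in> ell2 m"
  shows "(\<lambda>x. u x - v x) \<in> ell2 m"
proof -
  have "mt m (\<lambda>x. u x - v x) summable_on UNIV \<and> infsum (mt m (\<lambda>x. u x - v x)) UNIV \<le> 2 * infsum (mt m u) UNIV + 2 * infsum (mt m v) UNIV"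
  proof (rule comb_part[OF G])
    fix x
    have "(cmod (u x - v x))\<^sup>2 * m x \<le> (2*(cmod (u x))\<^sup>2 + 2*(cmod (v x))\<^sup>2) * m x"
      by (rule mult_right_mono) (use sq_add_le[of "u x" "- v x"] mpos[OF G, of x] in auto)
    thus "mt m (\<lambda>x. u x - v x) x \<le> 2 * mt m u x + 2 * mt m v x" unfolding mt_def by (simp add: algebra_simps)
  qed (use assms mt_nn[OF G] in \<open>auto simp: ell2_iff\<close>)
  thus ?thesis by (simp add: ell2_iff)
qed

lemma mt_le_Mr:
  assumes "h \<in> ell2 m"
  shows "(cmod (h x))\<^sup>2 * m x \<le> Mr m h"
proof -
  have "sum (mt m h) {x} \<le> infsum (mt m h) UNIV"
    by (rule finite_sum_le_infsum) (use assms mt_nn[OF G] in \<open>auto simp: ell2_iff\<close>)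
  thus ?thesis by (simp add: Mr_def mt_def)
qed

lemma pointwise_from_Mr:
  assumes "\<And>n. h n \<in> ell2 m" "(\<lambda>n. Mr m (h n)) \<longlonglongrightarrow> 0"
  shows "(\<lambda>n. h n x) \<longlonglongrightarrow> 0"
proof -
  have "(\<lambda>n. (cmod (h n x))\<^sup>2) \<longlonglongrightarrow> 0"
  proof (rule tendsto_sandwich[of "\<lambda>_. 0" _ _ "\<lambda>n. Mr m (h n) / m x"])
    show "\<forall>\<^sub>F n in sequentially. (cmod (h n x))\<^sup>2 \<le> Mr m (h n) / m x"
      using mt_le_Mr[OF assms(1)] mpos[OF G, of x] by (auto simp: pos_le_divide_eq)
    show "(\<lambda>n. Mr m (h n) / m x) \<longlonglongrightarrow> 0" using tendsto_divide_zero[OF assms(2)] by simp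
  qed auto
  hence "(\<lambda>n. sqrt ((cmod (h n x))\<^sup>2)) \<longlonglongrightarrow> sqrt 0" by (rule tendsto_real_sqrt)
  hence "(\<lambda>n. norm (h n x)) \<longlonglongrightarrow> 0" by simp
  thus ?thesis by (simp add: tendsto_norm_zero_iff)
qed

end

context
  fixes m :: "'v \<Rightarrow> real" and b :: "'v \<Rightarrow> 'v \<Rightarrow> real" and c :: "'v \<Rightarrow> real"
  assumes G: "is_graph m b c"
begin

lemma D_ell2: "f \<in> DQN m b c \<Longrightarrow> f \<in> ell2 m" by (simp add: DQN_iff ell2_iff)

lemma approx_unfold:
  assumes "approx_seq m (form_restrict (QN m b c) finsupp) \<phi> u"
  shows "\<And>n. \<phi> n \<in> DQN m b c" "\<And>n. \<phi> n \<in> finsupp"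
    "(\<lambda>n. Mr m (\<lambda>x. \<phi> n x - u x)) \<longlonglongrightarrow> 0"
    "\<And>e. e > 0 \<Longrightarrow> \<exists>N. \<forall>n\<ge>N. \<forall>k\<ge>N. Qr b c (\<lambda>x. \<phi> n x - \<phi> k x) < e"
proof -
  have A: "\<forall>n. \<phi> n \<in> DQN m b c \<inter> finsupp"
     "(\<lambda>n. ell2_norm m (\<phi> n - u)) \<longlonglongrightarrow> 0"
     "\<forall>e>0. \<exists>N. \<forall>n\<ge>N. \<forall>k\<ge>N. cmod (QNval b c (\<phi> n - \<phi> k) (\<phi> n - \<phi> k)) < e"
    using assms unfolding approx_seq_def form_restrict_def QN_def by auto
  show D: "\<And>n. \<phi> n \<in> DQN m b c" "\<And>n. \<phi> n \<in> finsupp" using A(1) by auto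
  have fd: "\<phi> n - \<phi> k = (\<lambda>x. \<phi> n x - \<phi> k x)" for n k by (rule ext) simp
  have fu: "\<phi> n - u = (\<lambda>x. \<phi> n x - u x)" for n by (rule ext) simp
  have "(\<lambda>n. (ell2_norm m (\<phi> n - u))\<^sup>2) \<longlonglongrightarrow> 0\<^sup>2" by (intro tendsto_power A(2))
  moreover have "(ell2_norm m (\<phi> n - u))\<^sup>2 = Mr m (\<lambda>x. \<phi> n x - u x)" for n
    unfolding ell2_norm_eq fu using Mr_nn[OF G] by simp
  ultimately show "(\<lambda>n. Mr m (\<lambda>x. \<phi> n x - u x)) \<longlonglongrightarrow> 0" by simp
  fix e :: real assume "e > 0"
  then obtain N where N: "\<forall>n\<ge>N. \<forall>k\<ge>N. cmod (QNval b c (\<phi> n - \<phi> k) (\<phi> n - \<phi> k)) < e" using A(3) by blast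
  have "Qr b c (\<lambda>x. \<phi> n x - \<phi> k x) < e" if "n \<ge> N" "k \<ge> N" for n k
  proof -
    have "(\<lambda>x. \<phi> n x - \<phi> k x) \<in> DQN m b c" by (rule D_diff(1)[OF G D(1) D(1)])
    moreover have "cmod (QNval b c (\<lambda>x. \<phi> n x - \<phi> k x) (\<lambda>x. \<phi> n x - \<phi> k x)) < e"
      using N that unfolding fd by blast
    ultimately show ?thesis using QN_self[OF G] Qr_nn[OF G, of "\<lambda>x. \<phi> n x - \<phi> k x"] by simp
  qed
  thus "\<exists>N. \<forall>n\<ge>N. \<forall>k\<ge>N. Qr b c (\<lambda>x. \<phi> n x - \<phi> k x) < e" by blast
qed

lemma approx_D:
  assumes ap: "approx_seq m (form_restrict (QN m b c) finsupp) \<phi> u" and u: "u \<in> ell2 m"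
  shows "u \<in> DQN m b c" "(\<lambda>n. Qr b c (\<lambda>x. \<phi> n x - u x)) \<longlonglongrightarrow> 0"
    "(\<lambda>n. Mr m (\<lambda>x. \<phi> n x - u x)) \<longlonglongrightarrow> 0"
proof -
  note U = approx_unfold[OF ap]
  show M: "(\<lambda>n. Mr m (\<lambda>x. \<phi> n x - u x)) \<longlonglongrightarrow> 0" by (rule U(3))
  have el: "(\<lambda>x. \<phi> n x - u x) \<in> ell2 m" for n by (rule ell2_diff[OF G D_ell2[OF U(1)] u])
  have pw: "(\<lambda>k. \<phi> k x) \<longlonglongrightarrow> u x" for x
    using pointwise_from_Mr[OF G el M, of x] by (simp add: LIM_zero_iff)
  have key: "(\<lambda>x. \<phi> n x - u x) \<in> DQN m b c \<and> Qr b c (\<lambda>x. \<phi> n x - u x) \<le> 2 * e"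
    if N: "\<forall>n\<ge>N. \<forall>k\<ge>N. Qr b c (\<lambda>x. \<phi> n x - \<phi> k x) < e" and n: "n \<ge> N" for N n e
  proof -
    have P: "pt b (\<lambda>x. \<phi> n x - u x) summable_on UNIV \<and> infsum (pt b (\<lambda>x. \<phi> n x - u x)) UNIV \<le> 2 * e"
    proof (rule fatou_real[where F = "\<lambda>k. pt b (\<lambda>x. \<phi> n x - \<phi> k x)" and N = N])
      show "0 \<le> pt b (\<lambda>x. \<phi> n x - \<phi> k x) p" for k p by (rule pt_nn[OF G])
      show "(\<lambda>k. pt b (\<lambda>x. \<phi> n x - \<phi> k x) p) \<longlonglongrightarrow> pt b (\<lambda>x. \<phi> n x - u x) p" for p
        by (cases p) (auto simp: pt_def intro!: tendsto_eq_intros pw)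
      fix k assume k: "k \<ge> N"
      have hD: "(\<lambda>x. \<phi> n x - \<phi> k x) \<in> DQN m b c" by (rule D_diff(1)[OF G U(1) U(1)])
      have "Qr b c (\<lambda>x. \<phi> n x - \<phi> k x) < e" using N n k by auto
      thus "pt b (\<lambda>x. \<phi> n x - \<phi> k x) summable_on UNIV \<and> infsum (pt b (\<lambda>x. \<phi> n x - \<phi> k x)) UNIV \<le> 2 * e"
        using hD Ivt_nn[OF G, of "\<lambda>x. \<phi> n x - \<phi> k x" UNIV] unfolding Qr_def by (auto simp: DQN_iff)
    qed
    have V: "vt c (\<lambda>x. \<phi> n x - u x) summable_on UNIV \<and> infsum (vt c (\<lambda>x. \<phi> n x - u x)) UNIV \<le> e"
    proof (rule fatou_real[where F = "\<lambda>k. vt c (\<lambda>x. \<phi> n x - \<phi> k x)" and N = N])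
      show "0 \<le> vt c (\<lambda>x. \<phi> n x - \<phi> k x) p" for k p by (rule vt_nn[OF G])
      show "(\<lambda>k. vt c (\<lambda>x. \<phi> n x - \<phi> k x) p) \<longlonglongrightarrow> vt c (\<lambda>x. \<phi> n x - u x) p" for p
        by (auto simp: vt_def intro!: tendsto_eq_intros pw)
      fix k assume k: "k \<ge> N"
      have hD: "(\<lambda>x. \<phi> n x - \<phi> k x) \<in> DQN m b c" by (rule D_diff(1)[OF G U(1) U(1)])
      have "Qr b c (\<lambda>x. \<phi> n x - \<phi> k x) < e" using N n k by auto
      thus "vt c (\<lambda>x. \<phi> n x - \<phi> k x) summable_on UNIV \<and> infsum (vt c (\<lambda>x. \<phi> n x - \<phi> k x)) UNIV \<le> e"
        using hD Ipt_nn[OF G, of "\<lambda>x. \<phi> n x - \<phi> k x" UNIV] unfolding Qr_def by (auto simp: DQN_iff)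
    qed
    have "(\<lambda>x. \<phi> n x - u x) \<in> DQN m b c" using P V el[of n] by (simp add: DQN_iff ell2_iff)
    moreover have "Qr b c (\<lambda>x. \<phi> n x - u x) \<le> 2 * e" using P V unfolding Qr_def by linarith
    ultimately show ?thesis by blast
  qed
  obtain N1 where N1: "\<forall>n\<ge>N1. \<forall>k\<ge>N1. Qr b c (\<lambda>x. \<phi> n x - \<phi> k x) < 1" using U(4)[of 1] by auto
  have "(\<lambda>x. \<phi> N1 x - u x) \<in> DQN m b c" using key[OF N1, of N1] by simp
  from D_diff(1)[OF G U(1)[of N1] this] show "u \<in> DQN m b c" by simp
  show "(\<lambda>n. Qr b c (\<lambda>x. \<phi> n x - u x)) \<longlonglongrightarrow> 0"
  proof (rule LIMSEQ_I)
    fix r :: real assume r: "r > 0"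
    obtain N where N: "\<forall>n\<ge>N. \<forall>k\<ge>N. Qr b c (\<lambda>x. \<phi> n x - \<phi> k x) < r/3" using U(4)[of "r/3"] r by auto
    have "norm (Qr b c (\<lambda>x. \<phi> n x - u x) - 0) < r" if "n \<ge> N" for n
      using key[OF N that] Qr_nn[OF G, of "\<lambda>x. \<phi> n x - u x"] r by auto
    thus "\<exists>N. \<forall>n\<ge>N. norm (Qr b c (\<lambda>x. \<phi> n x - u x) - 0) < r" by blast
  qed
qed

lemma comb_conv:
  assumes ap: "approx_seq m (form_restrict (QN m b c) finsupp) \<phi> u" and u: "u \<in> ell2 m"
    and aq: "approx_seq m (form_restrict (QN m b c) finsupp) \<psi> v" and v: "v \<in> ell2 m"
  shows "(\<lambda>n. Qr b c (\<lambda>x. \<phi> n x + a * \<psi> n x)) \<longlonglongrightarrow> Qr b c (\<lambda>x. u x + a * v x)"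
proof -
  note U = approx_unfold[OF ap] and V = approx_unfold[OF aq]
  note uD = approx_D(1)[OF ap u] and vD = approx_D(1)[OF aq v]
  have avD: "(\<lambda>x. a * v x) \<in> DQN m b c" by (rule D_scale(1)[OF G vD])
  have apD: "(\<lambda>x. a * \<psi> n x) \<in> DQN m b c" for n by (rule D_scale(1)[OF G V(1)])
  show ?thesis
  proof (rule Qr_cont[OF G])
    show "(\<lambda>x. \<phi> n x + a * \<psi> n x) \<in> DQN m b c" for n by (rule D_add(1)[OF G U(1) apD])
    show "(\<lambda>x. u x + a * v x) \<in> DQN m b c" by (rule D_add(1)[OF G uD avD])
    show "(\<lambda>n. Qr b c (\<lambda>x. \<phi> n x + a * \<psi> n x - (u x + a * v x))) \<longlonglongrightarrow> 0"
    proof (rule tendsto_sandwich[of "\<lambda>_. 0" _ _ "\<lambda>n. 2 * Qr b c (\<lambda>x. \<phi> n x - u x) + 2 * ((cmod a)\<^sup>2 * Qr b c (\<lambda>x. \<psi> n x - v x))"])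
      show "\<forall>\<^sub>F n in sequentially. 0 \<le> Qr b c (\<lambda>x. \<phi> n x + a * \<psi> n x - (u x + a * v x))"
        using Qr_nn[OF G] by auto
      show "(\<lambda>n. 2 * Qr b c (\<lambda>x. \<phi> n x - u x) + 2 * ((cmod a)\<^sup>2 * Qr b c (\<lambda>x. \<psi> n x - v x))) \<longlonglongrightarrow> 0"
        using approx_D(2)[OF ap u] approx_D(2)[OF aq v] by (auto intro!: tendsto_eq_intros)
      show "\<forall>\<^sub>F n in sequentially. Qr b c (\<lambda>x. \<phi> n x + a * \<psi> n x - (u x + a * v x))
          \<le> 2 * Qr b c (\<lambda>x. \<phi> n x - u x) + 2 * ((cmod a)\<^sup>2 * Qr b c (\<lambda>x. \<psi> n x - v x))"
      proof (rule always_eventually, rule allI)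
        fix n
        have d1: "(\<lambda>x. \<phi> n x - u x) \<in> DQN m b c" by (rule D_diff(1)[OF G U(1) uD])
        have d2: "(\<lambda>x. \<psi> n x - v x) \<in> DQN m b c" by (rule D_diff(1)[OF G V(1) vD])
        have d3: "(\<lambda>x. a * (\<psi> n x - v x)) \<in> DQN m b c" by (rule D_scale(1)[OF G d2])
        have "(\<lambda>x. \<phi> n x + a * \<psi> n x - (u x + a * v x)) = (\<lambda>x. (\<phi> n x - u x) + a * (\<psi> n x - v x))"
          by (simp add: algebra_simps)
        thus "Qr b c (\<lambda>x. \<phi> n x + a * \<psi> n x - (u x + a * v x))
          \<le> 2 * Qr b c (\<lambda>x. \<phi> n x - u x) + 2 * ((cmod a)\<^sup>2 * Qr b c (\<lambda>x. \<psi> n x - v x))"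
          using D_add(2)[OF G d1 d3] D_scale(2)[OF G d2, of a] by simp
      qed
    qed simp
  qed
qed

lemma approx_values:
  assumes ap: "approx_seq m (form_restrict (QN m b c) finsupp) \<phi> u" and u: "u \<in> ell2 m"
    and aq: "approx_seq m (form_restrict (QN m b c) finsupp) \<psi> v" and v: "v \<in> ell2 m"
  shows "(\<lambda>n. QNval b c (\<phi> n) (\<psi> n)) \<longlonglongrightarrow> QNval b c u v"
proof -
  note U = approx_unfold[OF ap] and V = approx_unfold[OF aq]
  note uD = approx_D(1)[OF ap u] and vD = approx_D(1)[OF aq v]
  note C = comb_conv[OF ap u aq v]
  have c1: "(\<lambda>n. Qr b c (\<lambda>x. \<phi> n x + \<psi> n x)) \<longlonglongrightarrow> Qr b c (\<lambda>x. u x + v x)" using C[of 1] by simp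
  have c2: "(\<lambda>n. Qr b c (\<lambda>x. \<phi> n x - \<psi> n x)) \<longlonglongrightarrow> Qr b c (\<lambda>x. u x - v x)" using C[of "-1"] by simp
  have c3: "(\<lambda>n. Qr b c (\<lambda>x. \<phi> n x + \<i> * \<psi> n x)) \<longlonglongrightarrow> Qr b c (\<lambda>x. u x + \<i> * v x)" using C[of "\<i>"] by simp
  have c4: "(\<lambda>n. Qr b c (\<lambda>x. \<phi> n x - \<i> * \<psi> n x)) \<longlonglongrightarrow> Qr b c (\<lambda>x. u x - \<i> * v x)" using C[of "-\<i>"] by simp
  show ?thesis
    unfolding QN_pol[OF G U(1) V(1)] QN_pol[OF G uD vD]
    by (intro tendsto_intros c1 c2 c3 c4)
qed

end

definition near where
  "near m b c w \<longleftrightarrow> w \<in> DQN m b c \<and> (\<forall>e>0. \<exists>\<phi>\<in>finsupp. En m b c (\<lambda>x. w x - \<phi> x) < e)"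

lemma nat_small: "(e::real) > 0 \<Longrightarrow> \<exists>N::nat. \<forall>n\<ge>N. C / (real n + 1) < e" if "C \<ge> 0"
proof -
  assume e: "e > 0"
  obtain N :: nat where N: "real N > C / e" using reals_Archimedean2 by blast
  have "C / (real n + 1) < e" if "n \<ge> N" for n
  proof -
    have "C < e * real N" using N e by (simp add: divide_less_eq mult.commute)
    also have "\<dots> \<le> e * (real n + 1)" using that e by (intro mult_left_mono) auto
    finally show ?thesis by (simp add: divide_less_eq mult.commute)
  qed
  thus ?thesis by blast
qed

context
  fixes m :: "'v \<Rightarrow> real" and b :: "'v \<Rightarrow> 'v \<Rightarrow> real" and c :: "'v \<Rightarrow> real"
  assumes G: "is_graph m b c"
begin

lemma En_swap:
  assumes "f \<in> DQN m b c" "g \<in> DQN m b c"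
  shows "En m b c (\<lambda>x. g x - f x) = En m b c (\<lambda>x. f x - g x)"
proof -
  have d: "(\<lambda>x. f x - g x) \<in> DQN m b c" by (rule D_diff(1)[OF G assms])
  have "(\<lambda>x. g x - f x) = (\<lambda>x. (-1) * (f x - g x))" by (simp add: algebra_simps)
  thus ?thesis using D_scale(4)[OF G d, of "-1"] by simp
qed

lemma QD_fst: "fst (QD m b c) = {u \<in> ell2 m. \<exists>\<phi>. approx_seq m (form_restrict (QN m b c) finsupp) \<phi> u}"
  unfolding QD_def form_closure_def by simp

lemma QD_snd: "snd (QD m b c) u v = (THE z. \<forall>\<phi> \<psi>. approx_seq m (form_restrict (QN m b c) finsupp) \<phi> u
      \<longrightarrow> approx_seq m (form_restrict (QN m b c) finsupp) \<psi> v
      \<longrightarrow> (\<lambda>n. QNval b c (\<phi> n) (\<psi> n)) \<longlonglongrightarrow> z)"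
  unfolding QD_def form_closure_def form_restrict_def QN_def by simp

lemma QD_sub: "u \<in> fst (QD m b c) \<Longrightarrow> u \<in> DQN m b c"
  unfolding QD_fst using approx_D(1)[OF G] by blast

lemma QD_val:
  assumes "u \<in> fst (QD m b c)" "v \<in> fst (QD m b c)"
  shows "snd (QD m b c) u v = QNval b c u v"
proof -
  obtain \<phi> where ph: "approx_seq m (form_restrict (QN m b c) finsupp) \<phi> u" and u: "u \<in> ell2 m"
    using assms(1) unfolding QD_fst by blast
  obtain \<psi> where ps: "approx_seq m (form_restrict (QN m b c) finsupp) \<psi> v" and v: "v \<in> ell2 m"
    using assms(2) unfolding QD_fst by blast
  show ?thesis unfolding QD_snd
  proof (rule the_equality)
    show "\<forall>\<phi> \<psi>. approx_seq m (form_restrict (QN m b c) finsupp) \<phi> u \<longrightarrow>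
          approx_seq m (form_restrict (QN m b c) finsupp) \<psi> v \<longrightarrow>
          (\<lambda>n. QNval b c (\<phi> n) (\<psi> n)) \<longlonglongrightarrow> QNval b c u v"
      using approx_values[OF G _ u _ v] by blast
    fix z assume "\<forall>\<phi> \<psi>. approx_seq m (form_restrict (QN m b c) finsupp) \<phi> u \<longrightarrow>
          approx_seq m (form_restrict (QN m b c) finsupp) \<psi> v \<longrightarrow>
          (\<lambda>n. QNval b c (\<phi> n) (\<psi> n)) \<longlonglongrightarrow> z"
    hence "(\<lambda>n. QNval b c (\<phi> n) (\<psi> n)) \<longlonglongrightarrow> z" using ph ps by blast
    moreover have "(\<lambda>n. QNval b c (\<phi> n) (\<psi> n)) \<longlonglongrightarrow> QNval b c u v" by (rule approx_values[OF G ph u ps v])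
    ultimately show "z = QNval b c u v" by (rule LIMSEQ_unique)
  qed
qed

lemma near_QD:
  assumes "near m b c w"
  shows "w \<in> fst (QD m b c)"
proof -
  have wD: "w \<in> DQN m b c" using assms near_def by blast
  have "\<forall>n. \<exists>\<phi>. \<phi> \<in> finsupp \<and> En m b c (\<lambda>x. w x - \<phi> x) < 1 / (real n + 1)"
  proof
    fix n
    have "(1::real) / (real n + 1) > 0" by simp
    thus "\<exists>\<phi>. \<phi> \<in> finsupp \<and> En m b c (\<lambda>x. w x - \<phi> x) < 1 / (real n + 1)"
      using assms unfolding near_def by blast
  qed
  then obtain \<phi> where ph: "\<And>n. \<phi> n \<in> finsupp" "\<And>n. En m b c (\<lambda>x. w x - \<phi> n x) < 1 / (real n + 1)"
    by metis
  have phD: "\<phi> n \<in> DQN m b c" for n by (rule finsupp_D[OF G ph(1)])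
  have sw: "En m b c (\<lambda>x. \<phi> n x - w x) < 1 / (real n + 1)" for n
    using En_swap[OF phD wD, of n] ph(2)[of n] by simp
  have Mlim: "(\<lambda>n. Mr m (\<lambda>x. \<phi> n x - w x)) \<longlonglongrightarrow> 0"
  proof (rule tendsto_sandwich[of "\<lambda>_. 0" _ _ "\<lambda>n. 1 / (real n + 1)"])
    show "\<forall>\<^sub>F n in sequentially. 0 \<le> Mr m (\<lambda>x. \<phi> n x - w x)" using Mr_nn[OF G] by auto
    show "\<forall>\<^sub>F n in sequentially. Mr m (\<lambda>x. \<phi> n x - w x) \<le> 1 / (real n + 1)"
    proof (rule always_eventually, rule allI)
      fix n
      show "Mr m (\<lambda>x. \<phi> n x - w x) \<le> 1 / (real n + 1)"
        using sw[of n] Qr_nn[OF G, of "\<lambda>x. \<phi> n x - w x"] unfolding En_def by linarith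
    qed
    show "(\<lambda>n. 1 / (real n + 1)) \<longlonglongrightarrow> 0"
      using LIMSEQ_inverse_real_of_nat by (simp add: inverse_eq_divide add.commute)
  qed simp
  have ap: "approx_seq m (form_restrict (QN m b c) finsupp) \<phi> w"
    unfolding approx_seq_def
  proof (intro conjI allI impI)
    fix n show "\<phi> n \<in> fst (form_restrict (QN m b c) finsupp)"
      using phD ph(1) unfolding form_restrict_def QN_def by simp
  next
    have fu: "\<phi> n - w = (\<lambda>x. \<phi> n x - w x)" for n by (rule ext) simp
    have "(\<lambda>n. sqrt (Mr m (\<lambda>x. \<phi> n x - w x))) \<longlonglongrightarrow> sqrt 0" by (intro tendsto_real_sqrt Mlim)
    thus "(\<lambda>n. ell2_norm m (\<phi> n - w)) \<longlonglongrightarrow> 0" unfolding fu ell2_norm_eq by simp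
  next
    fix e :: real assume e: "e > 0"
    obtain N where N: "\<forall>n\<ge>N. 2 / (real n + 1) < e / 2" using nat_small[of 2 "e/2"] e by auto
    have "cmod (snd (form_restrict (QN m b c) finsupp) (\<phi> n - \<phi> k) (\<phi> n - \<phi> k)) < e"
      if "n \<ge> N" "k \<ge> N" for n k
    proof -
      have fd: "\<phi> n - \<phi> k = (\<lambda>x. \<phi> n x - \<phi> k x)" by (rule ext) simp
      have dD: "(\<lambda>x. \<phi> n x - \<phi> k x) \<in> DQN m b c" by (rule D_diff(1)[OF G phD phD])
      have a: "(\<lambda>x. \<phi> n x - w x) \<in> DQN m b c" by (rule D_diff(1)[OF G phD wD])
      have bb: "(\<lambda>x. w x - \<phi> k x) \<in> DQN m b c" by (rule D_diff(1)[OF G wD phD])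
      have "(\<lambda>x. \<phi> n x - \<phi> k x) = (\<lambda>x. (\<phi> n x - w x) + (w x - \<phi> k x))" by simp
      hence "En m b c (\<lambda>x. \<phi> n x - \<phi> k x) \<le> 2 * En m b c (\<lambda>x. \<phi> n x - w x) + 2 * En m b c (\<lambda>x. w x - \<phi> k x)"
        using D_add(4)[OF G a bb] by simp
      also have "\<dots> < 2 / (real n + 1) + 2 / (real k + 1)" using sw[of n] ph(2)[of k] by simp
      also have "\<dots> < e" using N[rule_format, OF that(1)] N[rule_format, OF that(2)] by linarith
      finally have "Qr b c (\<lambda>x. \<phi> n x - \<phi> k x) < e" using Mr_nn[OF G] unfolding En_def by (smt (verit))
      thus ?thesis unfolding form_restrict_def QN_def fd using QN_self[OF G dD] Qr_nn[OF G] by simp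
    qed
    thus "\<exists>N. \<forall>n\<ge>N. \<forall>k\<ge>N. cmod (snd (form_restrict (QN m b c) finsupp) (\<phi> n - \<phi> k) (\<phi> n - \<phi> k)) < e"
      by blast
  qed
  show ?thesis unfolding QD_fst using ap wD D_ell2[OF G] by blast
qed

lemma exists_w:
  assumes "\<not> form_eq (QN m b c) (QD m b c)"
  shows "\<exists>w. w \<in> DQN m b c \<and> \<not> near m b c w"
proof (rule ccontr)
  assume "\<not> ?thesis"
  hence all: "\<And>w. w \<in> DQN m b c \<Longrightarrow> near m b c w" by blast
  have eq: "fst (QD m b c) = DQN m b c" using QD_sub near_QD all by blast
  have "form_eq (QN m b c) (QD m b c)"
    unfolding form_eq_def
  proof (intro conjI ballI)
    show "fst (QN m b c) = fst (QD m b c)" using eq by (simp add: QN_def)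
    fix u v assume "u \<in> fst (QN m b c)" "v \<in> fst (QN m b c)"
    hence "u \<in> fst (QD m b c)" "v \<in> fst (QD m b c)" using eq by (auto simp: QN_def)
    thus "snd (QN m b c) u v = snd (QD m b c) u v" using QD_val by (simp add: QN_def)
  qed
  thus False using assms by blast
qed

end

definition clamp :: "real \<Rightarrow> real \<Rightarrow> real" where "clamp K s = max 0 (min K s)"
definition rho :: "real \<Rightarrow> real \<Rightarrow> real" where "rho K s = s - clamp K s + clamp K (- s)"

lemma clamp_lip: "K \<ge> 0 \<Longrightarrow> \<bar>clamp K s - clamp K t\<bar> \<le> \<bar>s - t\<bar>"
  unfolding clamp_def by (auto simp: max_def min_def abs_if)
lemma clamp_abs: "K \<ge> 0 \<Longrightarrow> \<bar>clamp K s\<bar> \<le> \<bar>s\<bar>"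
  unfolding clamp_def by (auto simp: max_def min_def abs_if)
lemma clamp_range: "K \<ge> 0 \<Longrightarrow> 0 \<le> clamp K s \<and> clamp K s \<le> K"
  unfolding clamp_def by (auto simp: max_def min_def)
lemma rho_lip: "K \<ge> 0 \<Longrightarrow> \<bar>rho K s - rho K t\<bar> \<le> \<bar>s - t\<bar>"
  unfolding rho_def clamp_def by (auto simp: max_def min_def abs_if)
lemma rho_abs: "K \<ge> 0 \<Longrightarrow> \<bar>rho K s\<bar> \<le> \<bar>s\<bar>"
  unfolding rho_def clamp_def by (auto simp: max_def min_def abs_if)
lemma rho_zero: "\<bar>s\<bar> \<le> K \<Longrightarrow> rho K s = 0"
proof -
  assume a: "\<bar>s\<bar> \<le> K"
  hence "K \<ge> 0" by linarith
  thus ?thesis using a unfolding rho_def clamp_def by (auto simp: max_def min_def abs_if)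
qed
lemma rho_decomp: "K \<ge> 0 \<Longrightarrow> s = clamp K s - clamp K (-s) + rho K s"
  unfolding rho_def by simp

lemma cmod_sq_parts: "(cmod z)\<^sup>2 = (Re z)\<^sup>2 + (Im z)\<^sup>2" by (rule cmod_power2)

lemma R_contract:
  assumes K: "K \<ge> 0"
  shows "cmod (complex_of_real (rho K (Re a)) + \<i> * complex_of_real (rho K (Im a)) -
               (complex_of_real (rho K (Re b')) + \<i> * complex_of_real (rho K (Im b')))) \<le> cmod (a - b')"
proof -
  let ?z = "complex_of_real (rho K (Re a)) + \<i> * complex_of_real (rho K (Im a)) -
               (complex_of_real (rho K (Re b')) + \<i> * complex_of_real (rho K (Im b')))"
  have "(cmod ?z)\<^sup>2 = (rho K (Re a) - rho K (Re b'))\<^sup>2 + (rho K (Im a) - rho K (Im b'))\<^sup>2"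
    by (simp add: cmod_power2)
  also have "\<dots> \<le> (Re a - Re b')\<^sup>2 + (Im a - Im b')\<^sup>2"
    using rho_lip[OF K, of "Re a" "Re b'"] rho_lip[OF K, of "Im a" "Im b'"]
    by (intro add_mono) (simp_all add: abs_le_square_iff)
  also have "\<dots> = (cmod (a - b'))\<^sup>2" by (simp add: cmod_power2)
  finally show ?thesis by (simp add: power2_le_iff_abs_le)
qed

lemma R_abs:
  assumes K: "K \<ge> 0"
  shows "cmod (complex_of_real (rho K (Re a)) + \<i> * complex_of_real (rho K (Im a))) \<le> cmod a"
  using R_contract[OF K, of a 0] by (simp add: rho_def clamp_def)

lemma R_zero:
  assumes "cmod a \<le> K"
  shows "complex_of_real (rho K (Re a)) + \<i> * complex_of_real (rho K (Im a)) = 0"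
  using rho_zero[of "Re a" K] rho_zero[of "Im a" K] abs_Re_le_cmod[of a] abs_Im_le_cmod[of a] assms by simp

context
  fixes m :: "'v \<Rightarrow> real" and b :: "'v \<Rightarrow> 'v \<Rightarrow> real" and c :: "'v \<Rightarrow> real"
  assumes G: "is_graph m b c"
begin

lemma finsupp_add: "\<phi> \<in> finsupp \<Longrightarrow> \<psi> \<in> finsupp \<Longrightarrow> (\<lambda>x. \<phi> x + \<psi> x) \<in> finsupp"
proof -
  assume a: "\<phi> \<in> finsupp" "\<psi> \<in> finsupp"
  have "{x. \<phi> x + \<psi> x \<noteq> 0} \<subseteq> {x. \<phi> x \<noteq> 0} \<union> {x. \<psi> x \<noteq> 0}" by auto
  thus ?thesis using a unfolding finsupp_def by (auto intro: finite_subset)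
qed

lemma finsupp_scale: "\<phi> \<in> finsupp \<Longrightarrow> (\<lambda>x. s * \<phi> x) \<in> finsupp"
proof -
  assume a: "\<phi> \<in> finsupp"
  have "{x. s * \<phi> x \<noteq> 0} \<subseteq> {x. \<phi> x \<noteq> 0}" by auto
  thus ?thesis using a unfolding finsupp_def by (auto intro: finite_subset)
qed

lemma near_add:
  assumes f: "near m b c f" and g: "near m b c g"
  shows "near m b c (\<lambda>x. f x + g x)"
  unfolding near_def
proof (intro conjI allI impI)
  have fD: "f \<in> DQN m b c" and gD: "g \<in> DQN m b c" using f g near_def by auto
  show "(\<lambda>x. f x + g x) \<in> DQN m b c" by (rule D_add(1)[OF G fD gD])
  fix e :: real assume e: "e > 0"
  obtain \<phi> where ph: "\<phi> \<in> finsupp" "En m b c (\<lambda>x. f x - \<phi> x) < e/4" using f e unfolding near_def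
    by (meson divide_pos_pos zero_less_numeral)
  obtain \<psi> where ps: "\<psi> \<in> finsupp" "En m b c (\<lambda>x. g x - \<psi> x) < e/4" using g e unfolding near_def
    by (meson divide_pos_pos zero_less_numeral)
  have d1: "(\<lambda>x. f x - \<phi> x) \<in> DQN m b c" by (rule D_diff(1)[OF G fD finsupp_D[OF G ph(1)]])
  have d2: "(\<lambda>x. g x - \<psi> x) \<in> DQN m b c" by (rule D_diff(1)[OF G gD finsupp_D[OF G ps(1)]])
  have "(\<lambda>x. f x + g x - (\<phi> x + \<psi> x)) = (\<lambda>x. (f x - \<phi> x) + (g x - \<psi> x))" by (simp add: algebra_simps)
  hence "En m b c (\<lambda>x. f x + g x - (\<phi> x + \<psi> x)) < e" using D_add(4)[OF G d1 d2] ph ps by simp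
  thus "\<exists>\<phi>\<in>finsupp. En m b c (\<lambda>x. f x + g x - \<phi> x) < e"
    using finsupp_add[OF ph(1) ps(1)] by (intro bexI[where x="\<lambda>x. \<phi> x + \<psi> x"]) auto
qed

lemma near_scale:
  assumes f: "near m b c f"
  shows "near m b c (\<lambda>x. s * f x)"
  unfolding near_def
proof (intro conjI allI impI)
  have fD: "f \<in> DQN m b c" using f near_def by auto
  show "(\<lambda>x. s * f x) \<in> DQN m b c" by (rule D_scale(1)[OF G fD])
  fix e :: real assume e: "e > 0"
  have e': "e / ((cmod s)\<^sup>2 + 1) > 0" using e by (simp add: add_nonneg_pos)
  obtain \<phi> where ph: "\<phi> \<in> finsupp" "En m b c (\<lambda>x. f x - \<phi> x) < e / ((cmod s)\<^sup>2 + 1)"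
    using f e' unfolding near_def by blast
  have d1: "(\<lambda>x. f x - \<phi> x) \<in> DQN m b c" by (rule D_diff(1)[OF G fD finsupp_D[OF G ph(1)]])
  have "(\<lambda>x. s * f x - s * \<phi> x) = (\<lambda>x. s * (f x - \<phi> x))" by (simp add: algebra_simps)
  hence eq: "En m b c (\<lambda>x. s * f x - s * \<phi> x) = (cmod s)\<^sup>2 * En m b c (\<lambda>x. f x - \<phi> x)"
    using D_scale(4)[OF G d1] by simp
  have "(cmod s)\<^sup>2 * En m b c (\<lambda>x. f x - \<phi> x) \<le> ((cmod s)\<^sup>2 + 1) * En m b c (\<lambda>x. f x - \<phi> x)"
    using En_nn[OF G] by (intro mult_right_mono) auto
  also have "\<dots> < ((cmod s)\<^sup>2 + 1) * (e / ((cmod s)\<^sup>2 + 1))"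
    by (intro mult_strict_left_mono ph(2)) (simp add: add_nonneg_pos)
  also have "\<dots> = e"
  proof -
    have "(cmod s)\<^sup>2 + 1 > 0" by (simp add: add_nonneg_pos)
    thus ?thesis by (simp add: field_simps)
  qed
  finally have "En m b c (\<lambda>x. s * f x - s * \<phi> x) < e" using eq by simp
  thus "\<exists>\<phi>\<in>finsupp. En m b c (\<lambda>x. s * f x - \<phi> x) < e"
    using finsupp_scale[OF ph(1)] by (intro bexI[where x="\<lambda>x. s * \<phi> x"]) auto
qed

lemma near_limit:
  assumes wD: "w \<in> DQN m b c" and ap: "\<And>e. e > 0 \<Longrightarrow> \<exists>v. near m b c v \<and> En m b c (\<lambda>x. w x - v x) < e"
  shows "near m b c w"
  unfolding near_def
proof (intro conjI allI impI wD)
  fix e :: real assume e: "e > 0"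
  obtain v where v: "near m b c v" "En m b c (\<lambda>x. w x - v x) < e/4" using ap[of "e/4"] e by auto
  have vD: "v \<in> DQN m b c" using v near_def by auto
  obtain \<phi> where ph: "\<phi> \<in> finsupp" "En m b c (\<lambda>x. v x - \<phi> x) < e/4" using v e unfolding near_def
    by (meson divide_pos_pos zero_less_numeral)
  have d1: "(\<lambda>x. w x - v x) \<in> DQN m b c" by (rule D_diff(1)[OF G wD vD])
  have d2: "(\<lambda>x. v x - \<phi> x) \<in> DQN m b c" by (rule D_diff(1)[OF G vD finsupp_D[OF G ph(1)]])
  have "(\<lambda>x. w x - \<phi> x) = (\<lambda>x. (w x - v x) + (v x - \<phi> x))" by simp
  hence "En m b c (\<lambda>x. w x - \<phi> x) < e" using D_add(4)[OF G d1 d2] v ph by simp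
  thus "\<exists>\<phi>\<in>finsupp. En m b c (\<lambda>x. w x - \<phi> x) < e" using ph(1) by blast
qed

end

lemma tendsto_ev0: "(\<forall>k\<ge>N. f k = (0::real)) \<Longrightarrow> f \<longlonglongrightarrow> 0"
  by (rule tendsto_eventually) (auto simp: eventually_sequentially)

context
  fixes m :: "'v \<Rightarrow> real" and b :: "'v \<Rightarrow> 'v \<Rightarrow> real" and c :: "'v \<Rightarrow> real"
  assumes G: "is_graph m b c"
begin

lemma clamp_contract_D:
  assumes wD: "w \<in> DQN m b c" and K: "K \<ge> 0" and P: "\<And>a b'. \<bar>p a - p b'\<bar> \<le> cmod (a - b')" "\<And>a. \<bar>p a\<bar> \<le> cmod a"
  shows "(\<lambda>x. complex_of_real (clamp K (p (w x)))) \<in> DQN m b c"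
proof (rule D_contract(1)[OF G wD])
  fix x y
  have "cmod (complex_of_real (clamp K (p (w x))) - complex_of_real (clamp K (p (w y))))
      = \<bar>clamp K (p (w x)) - clamp K (p (w y))\<bar>" by (simp flip: of_real_diff)
  also have "\<dots> \<le> \<bar>p (w x) - p (w y)\<bar>" by (rule clamp_lip[OF K])
  also have "\<dots> \<le> cmod (w x - w y)" by (rule P(1))
  finally show "cmod (complex_of_real (clamp K (p (w x))) - complex_of_real (clamp K (p (w y)))) \<le> cmod (w x - w y)" .
  show "cmod (complex_of_real (clamp K (p (w x)))) \<le> cmod (w x)"
    using clamp_abs[OF K, of "p (w x)"] P(2)[of "w x"] by simp
qed

lemma exists_bounded:
  assumes wD: "w \<in> DQN m b c" and nw: "\<not> near m b c w"
  shows "\<exists>w' K. w' \<in> DQN m b c \<and> \<not> near m b c w' \<and> K \<ge> 0 \<and> (\<forall>x. Im (w' x) = 0 \<and> 0 \<le> Re (w' x) \<and> Re (w' x) \<le> K)"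
proof (rule ccontr)
  assume na: "\<not> ?thesis"
  define T1 where "T1 k = (\<lambda>x. complex_of_real (clamp (real k) (Re (w x))))" for k :: nat
  define T2 where "T2 k = (\<lambda>x. complex_of_real (clamp (real k) (- Re (w x))))" for k :: nat
  define T3 where "T3 k = (\<lambda>x. complex_of_real (clamp (real k) (Im (w x))))" for k :: nat
  define T4 where "T4 k = (\<lambda>x. complex_of_real (clamp (real k) (- Im (w x))))" for k :: nat
  define R where "R k = (\<lambda>x. complex_of_real (rho (real k) (Re (w x))) + \<i> * complex_of_real (rho (real k) (Im (w x))))" for k :: nat
  have P1: "\<bar>Re a - Re b'\<bar> \<le> cmod (a - b')" "\<bar>Re a\<bar> \<le> cmod a" for a b'
    using abs_Re_le_cmod[of "a - b'"] abs_Re_le_cmod[of a] by auto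
  have P2: "\<bar>- Re a - - Re b'\<bar> \<le> cmod (a - b')" "\<bar>- Re a\<bar> \<le> cmod a" for a b'
    using abs_Re_le_cmod[of "a - b'"] abs_Re_le_cmod[of a] by auto
  have P3: "\<bar>Im a - Im b'\<bar> \<le> cmod (a - b')" "\<bar>Im a\<bar> \<le> cmod a" for a b'
    using abs_Im_le_cmod[of "a - b'"] abs_Im_le_cmod[of a] by auto
  have P4: "\<bar>- Im a - - Im b'\<bar> \<le> cmod (a - b')" "\<bar>- Im a\<bar> \<le> cmod a" for a b'
    using abs_Im_le_cmod[of "a - b'"] abs_Im_le_cmod[of a] by auto
  have TD: "T1 k \<in> DQN m b c" "T2 k \<in> DQN m b c" "T3 k \<in> DQN m b c" "T4 k \<in> DQN m b c" for k
    unfolding T1_def T2_def T3_def T4_def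
    by (rule clamp_contract_D[OF wD _ P1, simplified], simp, rule clamp_contract_D[OF wD _ P2, simplified], simp,
        rule clamp_contract_D[OF wD _ P3, simplified], simp, rule clamp_contract_D[OF wD _ P4, simplified], simp)
  have bnd: "\<forall>x. Im (T k x) = 0 \<and> 0 \<le> Re (T k x) \<and> Re (T k x) \<le> real k" if "T \<in> {T1, T2, T3, T4}" for T k
    using that clamp_range[of "real k"] unfolding T1_def T2_def T3_def T4_def by auto
  have Tn: "near m b c (T k)" if "T \<in> {T1, T2, T3, T4}" for T k
  proof (rule ccontr)
    assume "\<not> near m b c (T k)"
    moreover have "T k \<in> DQN m b c" using that TD by auto
    ultimately show False using na bnd[OF that, of k] by (metis of_nat_0_le_iff)
  qed
  define W where "W k = (\<lambda>x. T1 k x + (-1) * T2 k x + (\<i> * T3 k x + (-\<i>) * T4 k x))" for k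
  have Wn: "near m b c (W k)" for k
    unfolding W_def
    by (intro near_add[OF G] near_scale[OF G] Tn) auto
  have dec: "w x - W k x = R k x" for x k
    unfolding W_def T1_def T2_def T3_def T4_def R_def rho_def by (simp add: complex_eq_iff)
  have RD: "R k \<in> DQN m b c" for k
  proof (rule D_contract(1)[OF G wD])
    fix x y show "cmod (R k x - R k y) \<le> cmod (w x - w y)" unfolding R_def by (rule R_contract) simp
    show "cmod (R k x) \<le> cmod (w x)" unfolding R_def by (rule R_abs) simp
  qed
  have Rc: "cmod (R k x - R k y) \<le> cmod (w x - w y)" "cmod (R k x) \<le> cmod (w x)" for k x y
    unfolding R_def by (rule R_contract, simp, rule R_abs, simp)
  have Rz: "R k x = 0" if "cmod (w x) \<le> real k" for k x
    unfolding R_def by (rule R_zero[OF that])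
  have ev: "\<exists>N. \<forall>k\<ge>N. \<forall>x\<in>A. R k x = 0" if "finite A" for A
  proof -
    obtain N :: nat where N: "real N \<ge> (\<Sum>x\<in>A. cmod (w x))" by (meson real_arch_simple)
    have "cmod (w x) \<le> (\<Sum>x\<in>A. cmod (w x))" if "x \<in> A" for x
      using member_le_sum[of x A "\<lambda>x. cmod (w x)"] that \<open>finite A\<close> by auto
    hence "\<forall>k\<ge>N. \<forall>x\<in>A. R k x = 0" using N by (auto intro!: Rz) (smt (verit, best) of_nat_le_iff)
    thus ?thesis by blast
  qed
  have limP: "(\<lambda>k. infsum (pt b (R k)) UNIV) \<longlonglongrightarrow> 0"
  proof (rule dominated_real[where G = "pt b w"])
    show "0 \<le> pt b (R k) p" for k p by (rule pt_nn[OF G])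
    show "pt b (R k) p \<le> pt b w p" for k p
      using Rc(1)[of k "fst p" "snd p"] bnn[OF G, of "fst p" "snd p"]
      by (cases p) (auto simp: pt_def intro!: mult_left_mono power_mono)
    show "pt b w summable_on UNIV" using wD by (simp add: DQN_iff)
    fix p :: "'v \<times> 'v"
    obtain N where "\<forall>k\<ge>N. \<forall>x\<in>{fst p, snd p}. R k x = 0" using ev[of "{fst p, snd p}"] by auto
    thus "(\<lambda>k. pt b (R k) p) \<longlonglongrightarrow> 0" by (intro tendsto_ev0[of N]) (cases p, auto simp: pt_def)
  qed
  have limV: "(\<lambda>k. infsum (vt c (R k)) UNIV) \<longlonglongrightarrow> 0"
  proof (rule dominated_real[where G = "vt c w"])
    show "0 \<le> vt c (R k) p" for k p by (rule vt_nn[OF G])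
    show "vt c (R k) p \<le> vt c w p" for k p
      using Rc(2)[of k p] cnn[OF G, of p] by (auto simp: vt_def intro!: mult_left_mono power_mono)
    show "vt c w summable_on UNIV" using wD by (simp add: DQN_iff)
    fix p :: "'v"
    obtain N where "\<forall>k\<ge>N. \<forall>x\<in>{p}. R k x = 0" using ev[of "{p}"] by auto
    thus "(\<lambda>k. vt c (R k) p) \<longlonglongrightarrow> 0" by (intro tendsto_ev0[of N]) (auto simp: vt_def)
  qed
  have limM: "(\<lambda>k. infsum (mt m (R k)) UNIV) \<longlonglongrightarrow> 0"
  proof (rule dominated_real[where G = "mt m w"])
    show "0 \<le> mt m (R k) p" for k p by (rule mt_nn[OF G])
    show "mt m (R k) p \<le> mt m w p" for k p
      using Rc(2)[of k p] mpos[OF G, of p] by (auto simp: mt_def intro!: mult_right_mono power_mono)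
    show "mt m w summable_on UNIV" using wD by (simp add: DQN_iff)
    fix p :: "'v"
    obtain N where "\<forall>k\<ge>N. \<forall>x\<in>{p}. R k x = 0" using ev[of "{p}"] by auto
    thus "(\<lambda>k. mt m (R k) p) \<longlonglongrightarrow> 0" by (intro tendsto_ev0[of N]) (auto simp: mt_def)
  qed
  have limE: "(\<lambda>k. En m b c (R k)) \<longlonglongrightarrow> 0"
    unfolding En_def Qr_def Mr_def using limP limV limM by (auto intro!: tendsto_eq_intros)
  have "near m b c w"
  proof (rule near_limit[OF G wD])
    fix e :: real assume e: "e > 0"
    obtain k where "norm (En m b c (R k) - 0) < e" using LIMSEQ_D[OF limE e] by blast
    hence "En m b c (\<lambda>x. w x - W k x) < e" unfolding dec using En_nn[OF G, of "R k"] by (simp add: fun_eq_iff)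
    thus "\<exists>v. near m b c v \<and> En m b c (\<lambda>x. w x - v x) < e" using Wn by blast
  qed
  thus False using nw by blast
qed

end

definition Ax where "Ax m b c F x = infsum (\<lambda>y. b x y * (F x - F y)) UNIV + (c x + m x) * F x"
definition Bx where "Bx m b c x = infsum (b x) UNIV + c x + m x"

lemma cmod_of_real_diff_sq: "(cmod (complex_of_real a - complex_of_real b'))\<^sup>2 = (a - b')\<^sup>2"
  by (simp flip: of_real_diff)

lemma infsum_point:
  fixes h :: "'a \<Rightarrow> real"
  assumes "h summable_on UNIV"
  shows "(\<lambda>y. h y + (if y = x then a else 0)) summable_on UNIV"
    "infsum (\<lambda>y. h y + (if y = x then a else 0)) UNIV = infsum h UNIV + a"
proof -
  have s: "(\<lambda>y. if y = x then a else 0) summable_on UNIV"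
    by (rule summable_finite_support[of "{x}"]) auto
  have i: "infsum (\<lambda>y. if y = x then a else 0) UNIV = a"
  proof -
    have "infsum (\<lambda>y. if y = x then a else 0) UNIV = infsum (\<lambda>y. if y = x then a else 0) {x}"
      by (rule infsum_cong_neutral) auto
    thus ?thesis by simp
  qed
  show "(\<lambda>y. h y + (if y = x then a else 0)) summable_on UNIV" by (rule summable_on_add[OF assms s])
  show "infsum (\<lambda>y. h y + (if y = x then a else 0)) UNIV = infsum h UNIV + a"
    using infsum_add[OF assms s] i by simp
qed

context
  fixes m :: "'v \<Rightarrow> real" and b :: "'v \<Rightarrow> 'v \<Rightarrow> real" and c :: "'v \<Rightarrow> real"
  assumes G: "is_graph m b c"
begin

lemma bounded_b_summable:
  fixes h :: "'v \<Rightarrow> real"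
  assumes "C \<ge> 0" "\<And>z. \<bar>h z\<bar> \<le> C * b x z"
  shows "h summable_on UNIV"
proof -
  have "(\<lambda>z. C * b x z) summable_on UNIV" by (rule summable_on_cmult_right) (rule bsum[OF G])
  hence "(\<lambda>z. norm (h z)) summable_on UNIV"
    by (rule summable_on_comparison_test) (use assms in auto)
  thus ?thesis using summable_on_iff_abs_summable_on_real[of h UNIV] by blast
qed

lemma energy_shift:
  assumes fD: "(\<lambda>y. complex_of_real (F y)) \<in> DQN m b c" and Fb: "\<And>y. \<bar>F y\<bar> \<le> K"
  shows "En m b c (\<lambda>y. complex_of_real (F y + t * (if y = x then 1 else 0)))
       = En m b c (\<lambda>y. complex_of_real (F y)) + 2 * t * Ax m b c F x + t\<^sup>2 * Bx m b c x"
proof -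
  define f where "f = (\<lambda>y. complex_of_real (F y))"
  define g where "g = (\<lambda>y. complex_of_real (F y + t * (if y = x then 1 else 0)))"
  have K0: "K \<ge> 0" using Fb[of x] by linarith
  have Fd: "\<bar>F a - F z\<bar> \<le> 2 * K" for a z using Fb[of a] Fb[of z] by linarith
  define ph where "ph z = b x z * (2*t*(F x - F z) + t\<^sup>2)" for z
  have s1: "(\<lambda>z. b x z * (F x - F z)) summable_on UNIV"
  proof (rule bounded_b_summable[of "2*K"])
    fix z show "\<bar>b x z * (F x - F z)\<bar> \<le> 2 * K * b x z"
      using Fd[of x z] bnn[OF G, of x z] by (simp add: abs_mult mult_left_mono mult.commute)
  qed (use K0 in auto)
  have sb: "b x summable_on UNIV" by (rule bsum[OF G])
  have phs: "ph summable_on UNIV"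
  proof -
    have "ph = (\<lambda>z. (2*t) * (b x z * (F x - F z)) + t\<^sup>2 * b x z)" unfolding ph_def by (auto simp: algebra_simps)
    moreover have "(\<lambda>z. (2*t) * (b x z * (F x - F z)) + t\<^sup>2 * b x z) summable_on UNIV"
      by (rule summable_on_add; rule summable_on_cmult_right) (use s1 sb in auto)
    ultimately show ?thesis by simp
  qed
  have phi: "infsum ph UNIV = 2 * t * infsum (\<lambda>z. b x z * (F x - F z)) UNIV + t\<^sup>2 * infsum (b x) UNIV"
  proof -
    have "ph = (\<lambda>z. (2*t) * (b x z * (F x - F z)) + t\<^sup>2 * b x z)" unfolding ph_def by (auto simp: algebra_simps)
    thus ?thesis using s1 sb
      by (simp add: infsum_add summable_on_cmult_right infsum_cmult_right)
  qed
  define D1 where "D1 p = (if fst p = x then ph (snd p) else 0)" for p :: "'v \<times> 'v"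
  define D2 where "D2 p = (if snd p = x then ph (fst p) else 0)" for p :: "'v \<times> 'v"
  have D1o: "D1 \<circ> Pair x = ph" unfolding D1_def by auto
  have D1s: "D1 summable_on UNIV"
  proof (rule summable_extend_zero[of D1 "Pair x ` UNIV"])
    show "D1 summable_on range (Pair x)" by (subst summable_on_reindex) (auto intro: inj_onI simp: D1o phs)
    fix p :: "'v \<times> 'v" assume "p \<notin> range (Pair x)"
    thus "D1 p = 0" unfolding D1_def by (cases p) auto
  qed
  have D1i: "infsum D1 UNIV = infsum ph UNIV"
  proof -
    have "infsum D1 UNIV = infsum D1 (range (Pair x))"
      by (rule infsum_cong_neutral) (auto simp: D1_def)
    also have "\<dots> = infsum (D1 \<circ> Pair x) UNIV" by (rule infsum_reindex) (auto intro: inj_onI)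
    finally show ?thesis using D1o by simp
  qed
  have bj: "bij_betw prod.swap (UNIV::('v\<times>'v) set) UNIV" by (rule bij_betwI[where g=prod.swap]) auto
  have D2e: "D2 = (\<lambda>p. D1 (prod.swap p))" unfolding D1_def D2_def by auto
  have D2s: "D2 summable_on UNIV" unfolding D2e using summable_on_reindex_bij_betw[OF bj, of D1] D1s by simp
  have D2i: "infsum D2 UNIV = infsum ph UNIV" unfolding D2e using infsum_reindex_bij_betw[OF bj, of D1] D1i by simp
  have ptf: "pt b f summable_on UNIV" "vt c f summable_on UNIV" "mt m f summable_on UNIV"
    using fD unfolding f_def by (auto simp: DQN_iff)
  have ptg: "pt b g = (\<lambda>p. pt b f p + D1 p + D2 p)"
  proof (rule ext)
    fix p :: "'v \<times> 'v"
    obtain y z where p: "p = (y,z)" by (cases p)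
    have r1: "pt b g p = b y z * ((F y + t * (if y = x then 1 else 0)) - (F z + t * (if z = x then 1 else 0)))\<^sup>2"
      unfolding p pt_def g_def prod.case cmod_of_real_diff_sq ..
    have r2: "pt b f p = b y z * (F y - F z)\<^sup>2"
      unfolding p pt_def f_def prod.case cmod_of_real_diff_sq ..
    have d1: "D1 p = (if y = x then ph z else 0)" by (simp add: D1_def p)
    have d2: "D2 p = (if z = x then ph y else 0)" by (simp add: D2_def p)
    show "pt b g p = pt b f p + D1 p + D2 p"
    proof (cases "y = x")
      case True note yx = this
      show ?thesis
      proof (cases "z = x")
        case True thus ?thesis using yx bdiag[OF G, of x]
          by (simp add: r1 r2 d1 d2 ph_def)
      next
        case False thus ?thesis using yx
          by (simp add: r1 r2 d1 d2 ph_def power2_eq_square algebra_simps)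
      qed
    next
      case False note yx = this
      show ?thesis
      proof (cases "z = x")
        case True thus ?thesis using yx bsym[OF G, of y x]
          by (simp add: r1 r2 d1 d2 ph_def power2_eq_square algebra_simps)
      next
        case False thus ?thesis using yx
          by (simp add: r1 r2 d1 d2 ph_def)
      qed
    qed
  qed
  have vtr: "vt c g y = c y * (F y + t * (if y = x then 1 else 0))\<^sup>2" for y
    unfolding vt_def g_def norm_of_real power2_abs ..
  have vfr: "vt c f y = c y * (F y)\<^sup>2" for y
    unfolding vt_def f_def norm_of_real power2_abs ..
  have mtr: "mt m g y = (F y + t * (if y = x then 1 else 0))\<^sup>2 * m y" for y
    unfolding mt_def g_def norm_of_real power2_abs ..
  have mfr: "mt m f y = (F y)\<^sup>2 * m y" for y
    unfolding mt_def f_def norm_of_real power2_abs ..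
  have vtg: "vt c g = (\<lambda>y. vt c f y + (if y = x then (2*t*F x + t\<^sup>2) * c x else 0))"
    by (rule ext) (auto simp: vtr vfr power2_eq_square algebra_simps)
  have mtg: "mt m g = (\<lambda>y. mt m f y + (if y = x then (2*t*F x + t\<^sup>2) * m x else 0))"
    by (rule ext) (auto simp: mtr mfr power2_eq_square algebra_simps)
  have P: "infsum (pt b g) UNIV = infsum (pt b f) UNIV + 2 * infsum ph UNIV"
    unfolding ptg using ptf D1s D2s D1i D2i by (simp add: infsum_add summable_on_add)
  have V: "infsum (vt c g) UNIV = infsum (vt c f) UNIV + (2*t*F x + t\<^sup>2) * c x"
    unfolding vtg by (rule infsum_point(2)[OF ptf(2)])
  have M: "infsum (mt m g) UNIV = infsum (mt m f) UNIV + (2*t*F x + t\<^sup>2) * m x"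
    unfolding mtg by (rule infsum_point(2)[OF ptf(3)])
  show ?thesis
    unfolding g_def[symmetric] f_def[symmetric] En_def Qr_def Mr_def P V M phi Ax_def Bx_def
    by (simp add: algebra_simps power2_eq_square)
qed

end

lemma En_parts: "En m b c h = infsum (pt b h) UNIV / 2 + infsum (vt c h) UNIV + infsum (mt m h) UNIV"
  unfolding En_def Qr_def Mr_def by simp

context
  fixes m :: "'v \<Rightarrow> real" and b :: "'v \<Rightarrow> 'v \<Rightarrow> real" and c :: "'v \<Rightarrow> real"
  assumes G: "is_graph m b c"
begin

lemma En_bounds:
  assumes "En m b c h \<le> B"
  shows "infsum (pt b h) UNIV \<le> 2 * B" "infsum (vt c h) UNIV \<le> B" "infsum (mt m h) UNIV \<le> B"
  using assms Ipt_nn[OF G, of h UNIV] Ivt_nn[OF G, of h UNIV] Imt_nn[OF G, of h UNIV]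
  unfolding En_parts by linarith+

lemma fatou_D:
  assumes lim: "\<And>x. (\<lambda>k. h k x) \<longlonglongrightarrow> h0 x" and hD: "\<And>k. k \<ge> N \<Longrightarrow> h k \<in> DQN m b c"
    and bd: "\<And>k. k \<ge> N \<Longrightarrow> En m b c (h k) \<le> B"
  shows "h0 \<in> DQN m b c" "En m b c h0 \<le> 4 * B"
proof -
  have P: "pt b h0 summable_on UNIV \<and> infsum (pt b h0) UNIV \<le> 2 * B"
  proof (rule fatou_real[where F = "\<lambda>k. pt b (h k)" and N = N])
    show "0 \<le> pt b (h k) p" for k p by (rule pt_nn[OF G])
    show "(\<lambda>k. pt b (h k) p) \<longlonglongrightarrow> pt b h0 p" for p
      by (cases p) (auto simp: pt_def intro!: tendsto_eq_intros lim)
    fix k assume "k \<ge> N"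
    thus "pt b (h k) summable_on UNIV \<and> infsum (pt b (h k)) UNIV \<le> 2 * B"
      using hD En_bounds(1)[OF bd] by (auto simp: DQN_iff)
  qed
  have V: "vt c h0 summable_on UNIV \<and> infsum (vt c h0) UNIV \<le> B"
  proof (rule fatou_real[where F = "\<lambda>k. vt c (h k)" and N = N])
    show "0 \<le> vt c (h k) p" for k p by (rule vt_nn[OF G])
    show "(\<lambda>k. vt c (h k) p) \<longlonglongrightarrow> vt c h0 p" for p
      by (auto simp: vt_def intro!: tendsto_eq_intros lim)
    fix k assume "k \<ge> N"
    thus "vt c (h k) summable_on UNIV \<and> infsum (vt c (h k)) UNIV \<le> B"
      using hD En_bounds(2)[OF bd] by (auto simp: DQN_iff)
  qed
  have M: "mt m h0 summable_on UNIV \<and> infsum (mt m h0) UNIV \<le> B"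
  proof (rule fatou_real[where F = "\<lambda>k. mt m (h k)" and N = N])
    show "0 \<le> mt m (h k) p" for k p by (rule mt_nn[OF G])
    show "(\<lambda>k. mt m (h k) p) \<longlonglongrightarrow> mt m h0 p" for p
      by (auto simp: mt_def intro!: tendsto_eq_intros lim)
    fix k assume "k \<ge> N"
    thus "mt m (h k) summable_on UNIV \<and> infsum (mt m (h k)) UNIV \<le> B"
      using hD En_bounds(3)[OF bd] by (auto simp: DQN_iff)
  qed
  show "h0 \<in> DQN m b c" using P V M by (simp add: DQN_iff)
  have "B \<ge> 0" using M Imt_nn[OF G, of h0 UNIV] by linarith
  thus "En m b c h0 \<le> 4 * B" using P V M unfolding En_parts by linarith
qed

end

context
  fixes m :: "'v \<Rightarrow> real" and b :: "'v \<Rightarrow> 'v \<Rightarrow> real" and c :: "'v \<Rightarrow> real"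
  assumes G: "is_graph m b c"
begin

lemma seq_exists:
  assumes wD: "w \<in> DQN m b c" and K0: "K \<ge> 0"
    and wr: "\<And>x. Im (w x) = 0 \<and> 0 \<le> Re (w x) \<and> Re (w x) \<le> K"
  shows "\<exists>f d. (\<forall>n. f n \<in> DQN m b c) \<and> (\<forall>n x. Im (f n x) = 0 \<and> 0 \<le> Re (f n x) \<and> Re (f n x) \<le> K)
     \<and> (\<forall>n. (\<lambda>x. w x - f n x) \<in> finsupp) \<and> (\<forall>\<phi>\<in>finsupp. d \<le> En m b c (\<lambda>x. w x - \<phi> x))
     \<and> (\<forall>n. En m b c (f n) < d + 1 / (real n + 1))"
proof -
  define S where "S = {En m b c (\<lambda>x. w x - \<phi> x) | \<phi>. \<phi> \<in> finsupp}"
  define d where "d = Inf S"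
  have z: "(\<lambda>_. 0::complex) \<in> finsupp" unfolding finsupp_def by simp
  have Sne: "S \<noteq> {}" unfolding S_def using z by blast
  have Sbdd: "bdd_below S" unfolding S_def using En_nn[OF G] by (auto intro!: bdd_belowI[where m=0])
  have dle: "d \<le> En m b c (\<lambda>x. w x - \<phi> x)" if "\<phi> \<in> finsupp" for \<phi>
    unfolding d_def by (rule cInf_lower[OF _ Sbdd]) (use that S_def in blast)
  have "\<forall>n. \<exists>\<phi>. \<phi> \<in> finsupp \<and> En m b c (\<lambda>x. w x - \<phi> x) < d + 1 / (real n + 1)"
  proof
    fix n
    have "Inf S < d + 1 / (real n + 1)" unfolding d_def by simp
    then obtain s where "s \<in> S" "s < d + 1 / (real n + 1)" using cInf_lessD[OF Sne] by blast
    thus "\<exists>\<phi>. \<phi> \<in> finsupp \<and> En m b c (\<lambda>x. w x - \<phi> x) < d + 1 / (real n + 1)" unfolding S_def by blast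
  qed
  then obtain \<psi> where ps: "\<And>n. \<psi> n \<in> finsupp" "\<And>n. En m b c (\<lambda>x. w x - \<psi> n x) < d + 1 / (real n + 1)"
    by metis
  define T where "T z = complex_of_real (clamp K (Re z))" for z
  define f where "f n = (\<lambda>x. T (w x - \<psi> n x))" for n
  have bD: "(\<lambda>x. w x - \<psi> n x) \<in> DQN m b c" for n by (rule D_diff(1)[OF G wD finsupp_D[OF G ps(1)]])
  have Tc: "cmod (T a - T a') \<le> cmod (a - a')" "cmod (T a) \<le> cmod a" for a a'
  proof -
    have "cmod (T a - T a') = \<bar>clamp K (Re a) - clamp K (Re a')\<bar>" unfolding T_def by (simp flip: of_real_diff)
    also have "\<dots> \<le> \<bar>Re a - Re a'\<bar>" by (rule clamp_lip[OF K0])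
    also have "\<dots> \<le> cmod (a - a')" using abs_Re_le_cmod[of "a - a'"] by simp
    finally show "cmod (T a - T a') \<le> cmod (a - a')" .
    show "cmod (T a) \<le> cmod a" unfolding T_def using clamp_abs[OF K0, of "Re a"] abs_Re_le_cmod[of a] by simp
  qed
  have fD: "f n \<in> DQN m b c" and fE: "En m b c (f n) \<le> En m b c (\<lambda>x. w x - \<psi> n x)" for n
    unfolding f_def using D_contract(1,4)[OF G bD, of "\<lambda>x. T (w x - \<psi> n x)" n] Tc by auto
  have Tw: "T (w x) = w x" for x
  proof -
    have "clamp K (Re (w x)) = Re (w x)" using wr[of x] unfolding clamp_def by auto
    thus ?thesis unfolding T_def using wr[of x] by (simp add: complex_eq_iff)
  qed
  have fs: "(\<lambda>x. w x - f n x) \<in> finsupp" for n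
  proof -
    have "{x. w x - f n x \<noteq> 0} \<subseteq> {x. \<psi> n x \<noteq> 0}" unfolding f_def using Tw by auto
    thus ?thesis using ps(1)[of n] unfolding finsupp_def by (auto intro: finite_subset)
  qed
  have fr: "Im (f n x) = 0 \<and> 0 \<le> Re (f n x) \<and> Re (f n x) \<le> K" for n x
    unfolding f_def T_def using clamp_range[OF K0] by auto
  have fl: "En m b c (f n) < d + 1 / (real n + 1)" for n using fE[of n] ps(2)[of n] by linarith
  show ?thesis using fD fr fs dle fl by blast
qed

lemma cauchyE:
  assumes fD: "\<And>n. f n \<in> DQN m b c" and fs: "\<And>n. (\<lambda>x. w x - f n x) \<in> finsupp"
    and dle: "\<And>\<phi>. \<phi> \<in> finsupp \<Longrightarrow> d \<le> En m b c (\<lambda>x. w x - \<phi> x)"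
    and fl: "\<And>n. En m b c (f n) < d + 1 / (real n + 1)"
  shows "En m b c (\<lambda>x. f n x - f k x) \<le> 2 / (real n + 1) + 2 / (real k + 1)"
proof -
  have par: "En m b c (\<lambda>x. f n x + f k x) + En m b c (\<lambda>x. f n x - f k x) = 2 * En m b c (f n) + 2 * En m b c (f k)"
    by (rule D_parallelogram[OF G fD fD])
  have sD: "(\<lambda>x. f n x + f k x) \<in> DQN m b c" by (rule D_add(1)[OF G fD fD])
  have hs: "(\<lambda>x. (1/2) * ((w x - f n x) + (w x - f k x))) \<in> finsupp"
    by (rule finsupp_scale[OF G finsupp_add[OF G fs fs]])
  have "d \<le> En m b c (\<lambda>x. w x - (1/2) * ((w x - f n x) + (w x - f k x)))" by (rule dle[OF hs])
  also have "(\<lambda>x. w x - (1/2) * ((w x - f n x) + (w x - f k x))) = (\<lambda>x. (1/2) * (f n x + f k x))"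
    by (simp add: algebra_simps)
  also have "En m b c (\<lambda>x. (1/2) * (f n x + f k x)) = (1/4) * En m b c (\<lambda>x. f n x + f k x)"
    using D_scale(4)[OF G sD, of "1/2"] by (simp add: power2_eq_square)
  finally have "4 * d \<le> En m b c (\<lambda>x. f n x + f k x)" by simp
  thus ?thesis using par fl[of n] fl[of k] by linarith
qed

lemma limit_exists:
  assumes fD: "\<And>n. f n \<in> DQN m b c" and fr: "\<And>n x. Im (f n x) = 0 \<and> 0 \<le> Re (f n x) \<and> Re (f n x) \<le> K"
    and ce: "\<And>n k. En m b c (\<lambda>x. f n x - f k x) \<le> 2 / (real n + 1) + 2 / (real k + 1)"
  shows "\<exists>U. (\<forall>x. (\<lambda>n. f n x) \<longlonglongrightarrow> complex_of_real (U x)) \<and> (\<forall>x. 0 \<le> U x \<and> U x \<le> K)"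
proof -
  have cy: "Cauchy (\<lambda>n. Re (f n x))" for x
  proof (rule CauchyI)
    fix e :: real assume e: "e > 0"
    have mx: "m x > 0" by (rule mpos[OF G])
    obtain N where N: "\<forall>n\<ge>N. (2 / m x) / (real n + 1) < e\<^sup>2 / 2"
      using nat_small[of "2 / m x" "e\<^sup>2/2"] e mx by auto
    have "norm (Re (f n x) - Re (f k x)) < e" if "n \<ge> N" "k \<ge> N" for n k
    proof -
      have dD: "(\<lambda>y. f n y - f k y) \<in> DQN m b c" by (rule D_diff(1)[OF G fD fD])
      have "(cmod (f n x - f k x))\<^sup>2 * m x \<le> Mr m (\<lambda>y. f n y - f k y)"
        using mt_le_Mr[OF G D_ell2[OF G dD], of x] by simp
      also have "\<dots> \<le> En m b c (\<lambda>y. f n y - f k y)" unfolding En_def using Qr_nn[OF G] by simp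
      also have "\<dots> \<le> 2 / (real n + 1) + 2 / (real k + 1)" by (rule ce)
      finally have "(cmod (f n x - f k x))\<^sup>2 \<le> (2 / (real n + 1) + 2 / (real k + 1)) / m x"
        using mx by (simp add: pos_le_divide_eq)
      also have "\<dots> = (2 / m x) / (real n + 1) + (2 / m x) / (real k + 1)"
        by (simp add: add_divide_distrib mult.commute)
      also have "\<dots> < e\<^sup>2" using N[rule_format, OF that(1)] N[rule_format, OF that(2)] by linarith
      finally have "(cmod (f n x - f k x))\<^sup>2 < e\<^sup>2" .
      hence "cmod (f n x - f k x) < e" using e by (simp add: power_less_imp_less_base)
      moreover have "\<bar>Re (f n x) - Re (f k x)\<bar> \<le> cmod (f n x - f k x)"
        using abs_Re_le_cmod[of "f n x - f k x"] by simp
      ultimately show ?thesis by simp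
    qed
    thus "\<exists>M. \<forall>n\<ge>M. \<forall>k\<ge>M. norm (Re (f n x) - Re (f k x)) < e" by blast
  qed
  define U where "U x = lim (\<lambda>n. Re (f n x))" for x
  have UL: "(\<lambda>n. Re (f n x)) \<longlonglongrightarrow> U x" for x
    using cy[of x] unfolding U_def by (simp add: Cauchy_convergent_iff convergent_LIMSEQ_iff)
  have fe: "f n x = complex_of_real (Re (f n x))" for n x using fr[of n x] by (simp add: complex_eq_iff)
  have "(\<lambda>n. f n x) \<longlonglongrightarrow> complex_of_real (U x)" for x
    by (subst fe) (rule tendsto_of_real[OF UL])
  moreover have "0 \<le> U x \<and> U x \<le> K" for x
    using LIMSEQ_le_const[OF UL[of x]] LIMSEQ_le_const2[OF UL[of x]] fr by blast
  ultimately show ?thesis by blast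
qed

end

lemma infsum_diff_real:
  fixes h1 h2 :: "'a \<Rightarrow> real"
  assumes "h1 summable_on A" "h2 summable_on A"
  shows "infsum (\<lambda>y. h1 y - h2 y) A = infsum h1 A - infsum h2 A"
proof -
  have "(\<lambda>y. - h2 y) summable_on A" using assms(2) by (simp add: summable_on_uminus)
  hence "infsum (\<lambda>y. h1 y + - h2 y) A = infsum h1 A + infsum (\<lambda>y. - h2 y) A"
    by (rule infsum_add[OF assms(1)])
  thus ?thesis by (simp add: infsum_uminus)
qed

context
  fixes m :: "'v \<Rightarrow> real" and b :: "'v \<Rightarrow> 'v \<Rightarrow> real" and c :: "'v \<Rightarrow> real"
  assumes G: "is_graph m b c"
begin

lemma Ax_conv:
  assumes Fr: "\<And>n y. 0 \<le> F n y \<and> F n y \<le> K" and UL: "\<And>y. (\<lambda>n. F n y) \<longlonglongrightarrow> U y"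
    and Ur: "\<And>y. 0 \<le> U y \<and> U y \<le> K"
  shows "(\<lambda>n. Ax m b c (F n) x) \<longlonglongrightarrow> Ax m b c U x"
proof -
  have K0: "K \<ge> 0" using Ur[of x] by linarith
  have s: "(\<lambda>y. b x y * (H x - H y)) summable_on UNIV" if "\<And>y. 0 \<le> H y \<and> H y \<le> K" for H
  proof (rule bounded_b_summable[OF G, of K])
    fix z
    have "\<bar>H x - H z\<bar> \<le> K" using that[of x] that[of z] by linarith
    hence "b x z * \<bar>H x - H z\<bar> \<le> b x z * K" by (rule mult_left_mono) (rule bnn[OF G])
    thus "\<bar>b x z * (H x - H z)\<bar> \<le> K * b x z" using bnn[OF G, of x z] by (simp add: abs_mult mult.commute)
  qed (use K0 in auto)
  define D where "D n y = b x y * \<bar>(F n x - F n y) - (U x - U y)\<bar>" for n y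
  have Dle: "D n y \<le> 2 * K * b x y" for n y
  proof -
    have "\<bar>(F n x - F n y) - (U x - U y)\<bar> \<le> 2 * K" using Fr[of n x] Fr[of n y] Ur[of x] Ur[of y] by linarith
    thus ?thesis unfolding D_def using bnn[OF G, of x y] by (simp add: mult_left_mono mult.commute)
  qed
  have Dnn: "0 \<le> D n y" for n y unfolding D_def using bnn[OF G] by simp
  have D0: "(\<lambda>n. infsum (D n) UNIV) \<longlonglongrightarrow> 0"
  proof (rule dominated_real[OF Dnn Dle])
    show "(\<lambda>y. 2 * K * b x y) summable_on UNIV" by (rule summable_on_cmult_right) (rule bsum[OF G])
    fix y show "(\<lambda>n. D n y) \<longlonglongrightarrow> 0"
      unfolding D_def using UL[of x] UL[of y] by (auto intro!: tendsto_eq_intros)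
  qed
  have Ds: "D n summable_on UNIV" for n
    by (rule summable_on_comparison_test[OF summable_on_cmult_right[OF bsum[OF G, of x], of "2*K"]]) (use Dle Dnn in auto)
  have diffle: "\<bar>infsum (\<lambda>y. b x y * (F n x - F n y)) UNIV - infsum (\<lambda>y. b x y * (U x - U y)) UNIV\<bar> \<le> infsum (D n) UNIV" for n
  proof -
    have e: "infsum (\<lambda>y. b x y * (F n x - F n y)) UNIV - infsum (\<lambda>y. b x y * (U x - U y)) UNIV
        = infsum (\<lambda>y. b x y * (F n x - F n y) - b x y * (U x - U y)) UNIV"
      by (rule infsum_diff_real[symmetric]) (use s Fr Ur in auto)
    have s2: "(\<lambda>y. b x y * (F n x - F n y) - b x y * (U x - U y)) summable_on UNIV"
    proof -
      have "(\<lambda>y. b x y * (F n x - F n y) + - (b x y * (U x - U y))) summable_on UNIV"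
      proof (rule summable_on_add)
        show "(\<lambda>y. b x y * (F n x - F n y)) summable_on UNIV" using s Fr by blast
        have "(\<lambda>y. b x y * (U x - U y)) summable_on UNIV" using s Ur by blast
        thus "(\<lambda>y. - (b x y * (U x - U y))) summable_on UNIV" by (simp add: summable_on_uminus)
      qed
      thus ?thesis by simp
    qed
    have "norm (infsum (\<lambda>y. b x y * (F n x - F n y) - b x y * (U x - U y)) UNIV) \<le> infsum (D n) UNIV"
    proof (rule norm_infsum_le[OF has_sum_infsum[OF s2] has_sum_infsum[OF Ds]])
      fix y
      have "b x y * (F n x - F n y) - b x y * (U x - U y) = b x y * ((F n x - F n y) - (U x - U y))"
        by (simp add: algebra_simps)
      thus "norm (b x y * (F n x - F n y) - b x y * (U x - U y)) \<le> D n y"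
        unfolding D_def using bnn[OF G, of x y] by (simp add: abs_mult)
    qed
    thus ?thesis using e by simp
  qed
  have I: "(\<lambda>n. infsum (\<lambda>y. b x y * (F n x - F n y)) UNIV) \<longlonglongrightarrow> infsum (\<lambda>y. b x y * (U x - U y)) UNIV"
  proof -
    have "(\<lambda>n. infsum (\<lambda>y. b x y * (F n x - F n y)) UNIV - infsum (\<lambda>y. b x y * (U x - U y)) UNIV) \<longlonglongrightarrow> 0"
    proof (rule tendsto_sandwich[of "\<lambda>n. - infsum (D n) UNIV" _ _ "\<lambda>n. infsum (D n) UNIV"])
      show "\<forall>\<^sub>F n in sequentially. - infsum (D n) UNIV \<le> infsum (\<lambda>y. b x y * (F n x - F n y)) UNIV - infsum (\<lambda>y. b x y * (U x - U y)) UNIV"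
      proof (intro always_eventually allI)
        fix n show "- infsum (D n) UNIV \<le> infsum (\<lambda>y. b x y * (F n x - F n y)) UNIV - infsum (\<lambda>y. b x y * (U x - U y)) UNIV"
          using diffle[of n] unfolding abs_le_iff by linarith
      qed
      show "\<forall>\<^sub>F n in sequentially. infsum (\<lambda>y. b x y * (F n x - F n y)) UNIV - infsum (\<lambda>y. b x y * (U x - U y)) UNIV \<le> infsum (D n) UNIV"
      proof (intro always_eventually allI)
        fix n show "infsum (\<lambda>y. b x y * (F n x - F n y)) UNIV - infsum (\<lambda>y. b x y * (U x - U y)) UNIV \<le> infsum (D n) UNIV"
          using diffle[of n] unfolding abs_le_iff by linarith
      qed
      show "(\<lambda>n. - infsum (D n) UNIV) \<longlonglongrightarrow> 0" using tendsto_minus[OF D0] by simp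
      show "(\<lambda>n. infsum (D n) UNIV) \<longlonglongrightarrow> 0" by (rule D0)
    qed
    thus ?thesis by (simp add: LIM_zero_iff)
  qed
  show ?thesis unfolding Ax_def by (intro tendsto_intros I UL)
qed

lemma EL_zero:
  assumes fnD: "\<And>n. (\<lambda>y. complex_of_real (F n y)) \<in> DQN m b c"
    and Fr: "\<And>n y. 0 \<le> F n y \<and> F n y \<le> K" and UL: "\<And>y. (\<lambda>n. F n y) \<longlonglongrightarrow> U y"
    and Ur: "\<And>y. 0 \<le> U y \<and> U y \<le> K"
    and ineq: "\<And>n t. d \<le> En m b c (\<lambda>y. complex_of_real (F n y + t * (if y = x then 1 else 0)))"
    and fl: "\<And>n. En m b c (\<lambda>y. complex_of_real (F n y)) < d + 1 / (real n + 1)"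
  shows "Ax m b c U x = 0"
proof -
  define A where "A = Ax m b c U x"
  define B where "B = Bx m b c x"
  have Bpos: "B > 0"
    unfolding B_def Bx_def using infsum_nonneg[of UNIV "b x"] bnn[OF G] cnn[OF G, of x] mpos[OF G, of x]
    by (smt (verit) UNIV_I)
  have Fb: "\<bar>F n y\<bar> \<le> K" for n y using Fr[of n y] by auto
  have q: "0 \<le> 2 * t * A + t\<^sup>2 * B" for t
  proof -
    have le: "0 \<le> 1 / (real n + 1) + 2 * t * Ax m b c (F n) x + t\<^sup>2 * B" for n
      using ineq[of n t] fl[of n] energy_shift[OF G fnD[of n] Fb[of n], of t x] unfolding B_def by linarith
    have "(\<lambda>n. 1 / (real n + 1) + 2 * t * Ax m b c (F n) x + t\<^sup>2 * B) \<longlonglongrightarrow> 0 + 2 * t * A + t\<^sup>2 * B"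
    proof (intro tendsto_intros)
      show "(\<lambda>n. 1 / (real n + 1)) \<longlonglongrightarrow> 0"
        using LIMSEQ_inverse_real_of_nat by (simp add: inverse_eq_divide add.commute)
      show "(\<lambda>n. Ax m b c (F n) x) \<longlonglongrightarrow> A" unfolding A_def by (rule Ax_conv[OF Fr UL Ur])
    qed
    hence "0 \<le> 0 + 2 * t * A + t\<^sup>2 * B" by (rule LIMSEQ_le_const) (use le in auto)
    thus ?thesis by simp
  qed
  have "0 \<le> 2 * (- A / B) * A + (- A / B)\<^sup>2 * B" by (rule q)
  also have "\<dots> = - (A\<^sup>2 / B)" using Bpos by (simp add: power2_eq_square field_simps)
  finally have "A\<^sup>2 / B \<le> 0" by simp
  hence "A\<^sup>2 \<le> 0" using Bpos by (simp add: divide_le_0_iff)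
  thus ?thesis unfolding A_def by simp
qed

end

context
  fixes m :: "'v \<Rightarrow> real" and b :: "'v \<Rightarrow> 'v \<Rightarrow> real" and c :: "'v \<Rightarrow> real"
  assumes G: "is_graph m b c"
begin

lemma main_construct:
  assumes wD: "w \<in> DQN m b c" and nw: "\<not> near m b c w" and K0: "K \<ge> 0"
    and wr: "\<And>x. Im (w x) = 0 \<and> 0 \<le> Re (w x) \<and> Re (w x) \<le> K"
  shows "\<exists>u. u \<in> DQN m b c \<and> u \<in> ell_infty \<and> (\<forall>x. Im (u x) = 0 \<and> Re (u x) \<ge> 0)
             \<and> u \<noteq> (\<lambda>_. 0) \<and> u \<in> Ftilde b \<and> (\<forall>x. Ltilde m b c u x + u x = 0)"
proof -
  obtain f d where fD: "\<And>n. f n \<in> DQN m b c" and fr: "\<And>n x. Im (f n x) = 0 \<and> 0 \<le> Re (f n x) \<and> Re (f n x) \<le> K"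
    and fs: "\<And>n. (\<lambda>x. w x - f n x) \<in> finsupp" and dle: "\<And>\<phi>. \<phi> \<in> finsupp \<Longrightarrow> d \<le> En m b c (\<lambda>x. w x - \<phi> x)"
    and fl: "\<And>n. En m b c (f n) < d + 1 / (real n + 1)"
    using seq_exists[OF G wD K0 wr] by blast
  note ce = cauchyE[OF G fD fs dle fl]
  obtain U where fL: "\<And>x. (\<lambda>n. f n x) \<longlonglongrightarrow> complex_of_real (U x)" and Ur: "\<And>x. 0 \<le> U x \<and> U x \<le> K"
    using limit_exists[OF G fD fr ce] by blast
  define u where "u = (\<lambda>x. complex_of_real (U x))"
  define F where "F n x = Re (f n x)" for n x
  have fe: "f n = (\<lambda>x. complex_of_real (F n x))" for n
    using fr unfolding F_def by (auto simp: complex_eq_iff)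
  have Fr: "0 \<le> F n y \<and> F n y \<le> K" for n y using fr unfolding F_def by auto
  have FL: "(\<lambda>n. F n y) \<longlonglongrightarrow> U y" for y
    unfolding F_def using tendsto_Re[OF fL[of y]] by simp
  have uD: "u \<in> DQN m b c"
  proof (rule fatou_D(1)[OF G, where h = f and N = 0 and B = "d + 1"])
    show "(\<lambda>k. f k x) \<longlonglongrightarrow> u x" for x unfolding u_def by (rule fL)
    show "f k \<in> DQN m b c" for k by (rule fD)
    fix k
    have "1 / (real k + 1) \<le> 1" by (simp add: divide_le_eq)
    thus "En m b c (f k) \<le> d + 1" using fl[of k] by linarith
  qed
  have unz: "u \<noteq> (\<lambda>_. 0)"
  proof
    assume u0: "u = (\<lambda>_. 0)"
    have small: "En m b c (f n) \<le> 16 / (real n + 1)" for n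
    proof -
      have "En m b c (f n) \<le> 4 * (4 / (real n + 1))"
      proof (rule fatou_D(2)[OF G, where h = "\<lambda>k x. f n x - f k x" and N = n])
        fix x
        have "(\<lambda>k. f k x) \<longlonglongrightarrow> 0" using fL[of x] u0 unfolding u_def by (metis)
        thus "(\<lambda>k. f n x - f k x) \<longlonglongrightarrow> f n x" using tendsto_diff[OF tendsto_const[of "f n x"]] by fastforce
      next
        fix k show "(\<lambda>x. f n x - f k x) \<in> DQN m b c" by (rule D_diff(1)[OF G fD fD])
      next
        fix k assume k: "n \<le> k"
        have "2 / (real k + 1) \<le> 2 / (real n + 1)" using k by (simp add: frac_le)
        thus "En m b c (\<lambda>x. f n x - f k x) \<le> 4 / (real n + 1)" using ce[of n k] by linarith
      qed
      thus ?thesis by simp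
    qed
    have "near m b c w"
      unfolding near_def
    proof (intro conjI allI impI wD)
      fix e :: real assume e: "e > 0"
      obtain N where N: "\<forall>n\<ge>N. 16 / (real n + 1) < e" using nat_small[of 16 e] e by auto
      have "En m b c (f N) < e" using small[of N] N[rule_format, of N] by linarith
      hence "En m b c (\<lambda>x. w x - (w x - f N x)) < e" by simp
      show "\<exists>\<phi>\<in>finsupp. En m b c (\<lambda>x. w x - \<phi> x) < e"
      proof (rule bexI[where x="\<lambda>x. w x - f N x"])
        show "En m b c (\<lambda>x. w x - (w x - f N x)) < e" by fact
        show "(\<lambda>x. w x - f N x) \<in> finsupp" by (rule fs)
      qed
    qed
    thus False using nw by blast
  qed
  have EL: "Ax m b c U x = 0" for x
  proof (rule EL_zero[OF G _ Fr FL Ur, of _ d])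
    show "(\<lambda>y. complex_of_real (F n y)) \<in> DQN m b c" for n using fD[of n] fe[of n] by simp
    show "En m b c (\<lambda>y. complex_of_real (F n y)) < d + 1 / (real n + 1)" for n using fl[of n] fe[of n] by simp
    fix n and t :: real
    define \<phi> where "\<phi> = (\<lambda>y. (w y - f n y) + complex_of_real (- t) * (if y = x then 1 else 0))"
    have ind: "(\<lambda>y. complex_of_real (- t) * (if y = x then 1 else 0)) \<in> finsupp"
    proof -
      have "{y. complex_of_real (- t) * (if y = x then 1 else 0) \<noteq> 0} \<subseteq> {x}" by auto
      thus ?thesis unfolding finsupp_def by (auto intro: finite_subset)
    qed
    have "\<phi> \<in> finsupp" unfolding \<phi>_def by (rule finsupp_add[OF G fs ind])
    hence "d \<le> En m b c (\<lambda>y. w y - \<phi> y)" by (rule dle)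
    also have "(\<lambda>y. w y - \<phi> y) = (\<lambda>y. complex_of_real (F n y + t * (if y = x then 1 else 0)))"
      unfolding \<phi>_def using fe[of n] by (auto simp: fun_eq_iff)
    finally show "d \<le> En m b c (\<lambda>y. complex_of_real (F n y + t * (if y = x then 1 else 0)))" .
  qed
  have K1: "\<bar>U x - U y\<bar> \<le> K" for x y using Ur[of x] Ur[of y] by linarith
  have sx: "(\<lambda>y. b x y * (U x - U y)) summable_on UNIV" for x
  proof (rule bounded_b_summable[OF G K0])
    fix z
    have "b x z * \<bar>U x - U z\<bar> \<le> b x z * K" by (rule mult_left_mono[OF K1 bnn[OF G]])
    thus "\<bar>b x z * (U x - U z)\<bar> \<le> K * b x z" using bnn[OF G, of x z] by (simp add: abs_mult mult.commute)
  qed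
  have "u \<in> ell_infty" unfolding ell_infty_def u_def using Ur by (auto intro!: exI[where x=K])
  moreover have "u \<in> Ftilde b"
    unfolding Ftilde_def
  proof (intro CollectI allI)
    fix x
    show "(\<lambda>y. cmod (complex_of_real (b x y) * u y)) summable_on UNIV"
    proof (rule summable_on_comparison_test[OF summable_on_cmult_right[OF bsum[OF G, of x], of K]])
      fix y
      show "0 \<le> cmod (complex_of_real (b x y) * u y)" by simp
      have "b x y * \<bar>U y\<bar> \<le> b x y * K" using Ur[of y] bnn[OF G, of x y] by (intro mult_left_mono) auto
      thus "cmod (complex_of_real (b x y) * u y) \<le> K * b x y"
        unfolding u_def using bnn[OF G, of x y] by (simp add: norm_mult mult.commute)
    qed
  qed
  moreover have "Ltilde m b c u x + u x = 0" for x
  proof -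
    have e1: "(\<lambda>y. complex_of_real (b x y) * (u x - u y)) = (\<lambda>y. complex_of_real (b x y * (U x - U y)))"
      unfolding u_def by auto
    have mx: "m x > 0" by (rule mpos[OF G])
    have "Ltilde m b c u x + u x
        = complex_of_real ((infsum (\<lambda>y. b x y * (U x - U y)) UNIV + (c x + m x) * U x) / m x)"
      unfolding Ltilde_def e1 infsum_of_real_c[OF G sx] using mx
      by (simp add: u_def field_simps)
    also have "\<dots> = 0" using EL[of x] unfolding Ax_def by simp
    finally show ?thesis .
  qed
  moreover have "\<forall>x. Im (u x) = 0 \<and> Re (u x) \<ge> 0" unfolding u_def using Ur by auto
  ultimately show ?thesis using uD unz by blast
qed

end

theorem mainTheorem7:
  fixes m :: "'v::countable \<Rightarrow> real" and b :: "'v \<Rightarrow> 'v \<Rightarrow> real" and c :: "'v \<Rightarrow> real"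
  assumes "is_graph m b c"
    and "\<not> form_eq (QN m b c) (QD m b c)"
  shows "\<exists>u. u \<in> DQN m b c \<and> u \<in> ell_infty \<and> (\<forall>x. Im (u x) = 0 \<and> Re (u x) \<ge> 0)
             \<and> u \<noteq> (\<lambda>_. 0) \<and> u \<in> Ftilde b \<and> (\<forall>x. Ltilde m b c u x + u x = 0)"
proof -
  obtain w where w: "w \<in> DQN m b c" "\<not> near m b c w" using exists_w[OF assms] by blast
  obtain w' K where w': "w' \<in> DQN m b c" "\<not> near m b c w'" "K \<ge> 0"
     "\<forall>x. Im (w' x) = 0 \<and> 0 \<le> Re (w' x) \<and> Re (w' x) \<le> K"
    using exists_bounded[OF assms(1) w] by blast
  show ?thesis by (rule main_construct[OF assms(1) w'(1) w'(2) w'(3)]) (use w'(4) in blast)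
qed


end
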